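(* For every bipartite state $\rho$ on $\mathcal{H}^A\otimes\mathcal{H}^B$ ($\dim\mathcal{H}^A=m$, $\dim\mathcal{H}^B=n$), the geometric discord satisfies $$D_G(\rho)=\frac{2}{m^2n}\Big[\mathrm{Tr}\,G-\max_{\{|k\rangle\}}\sum_{k=1}^m\vec{\mu}_k^{\mathrm t}G\vec{\mu}_k\Big],$$ where $G=\vec{x}\vec{x}^{\mathrm t}+\frac{2}{n}TT^{\mathrm t}$, the maximum is over all orthonormal bases $\{|k\rangle\}_{k=1}^m$ of $\mathcal{H}^A$, and $\vec{\mu}_k=\frac{\sqrt2}{m}\vec{\alpha}_k$ with $\vec{\alpha}_k\in\mathbb{R}^{m^2-1}$ the coherence vector of $|k\rangle\langle k|$, i.e. $|k\rangle\langle k|=\frac1m(\mathbb{I}+\vec{\alpha}_k\cdot\hat\lambda^A)$. In particular $D_G$ does not depend on the coherence vector $\vec{y}$ of $B$.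
   Context: Generators $\hat\lambda_i^A$ ($i=1,\dots,m^2-1$) of $SU(m)$ and $\hat\lambda_j^B$ of $SU(n)$ are Hermitian, traceless, with $\mathrm{Tr}(\hat\lambda_i\hat\lambda_j)=2\delta_{ij}$. For $\rho$, $x_i=\frac{m}{2}\mathrm{Tr}[(\hat\lambda_i^A\otimes\mathbb{I})\rho]$, $y_j=\frac{n}{2}\mathrm{Tr}[(\mathbb{I}\otimes\hat\lambda_j^B)\rho]$, $t_{ij}=\frac{mn}{4}\mathrm{Tr}[(\hat\lambda_i^A\otimes\hat\lambda_j^B)\rho]$, $T=(t_{ij})$. The geometric discord is $D_G(\rho)=\min_\chi\mathrm{Tr}(\rho-\chi)^2$ over zero-discord states $\chi=\sum_{k=1}^m p_k|k\rangle\langle k|\otimes\rho_k^B$ ($\{|k\rangle\}$ orthonormal basis of $\mathcal{H}^A$, $p_k$ probabilities, $\rho_k^B$ states on $\mathcal{H}^B$). *)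

theory Defs
  imports "Jordan_Normal_Form.Matrix"
begin

text \<open>Matrices are Jordan_Normal_Form complex matrices. Bipartite index convention:
  basis vector |a> (x) |b> of C^m (x) C^n has index a*n+b (Kronecker product).\<close>

definition kron :: "complex mat \<Rightarrow> complex mat \<Rightarrow> complex mat" where
  "kron A B = mat (dim_row A * dim_row B) (dim_col A * dim_col B)
     (\<lambda>(i,j). A $$ (i div dim_row B, j div dim_col B) * B $$ (i mod dim_row B, j mod dim_col B))"

definition mtrace :: "complex mat \<Rightarrow> complex" where
  "mtrace A = (\<Sum>i<dim_row A. A $$ (i,i))"

definition hermitian_mat :: "nat \<Rightarrow> complex mat \<Rightarrow> bool" where
  "hermitian_mat d A \<longleftrightarrow> A \<in> carrier_mat d d \<and> (\<forall>i<d. \<forall>j<d. A $$ (i,j) = cnj (A $$ (j,i)))"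

definition density_mat :: "nat \<Rightarrow> complex mat \<Rightarrow> bool" where
  "density_mat d A \<longleftrightarrow> hermitian_mat d A
     \<and> (\<forall>v \<in> carrier_vec d. 0 \<le> Re (\<Sum>i<d. \<Sum>j<d. cnj (v $ i) * A $$ (i,j) * v $ j))
     \<and> mtrace A = 1"

definition su_generators :: "nat \<Rightarrow> (nat \<Rightarrow> complex mat) \<Rightarrow> bool" where
  "su_generators d lam \<longleftrightarrow>
     (\<forall>i < d^2 - 1. hermitian_mat d (lam i) \<and> mtrace (lam i) = 0)
     \<and> (\<forall>i < d^2 - 1. \<forall>j < d^2 - 1. mtrace (lam i * lam j) = (if i = j then 2 else 0))"

definition onb :: "nat \<Rightarrow> (nat \<Rightarrow> complex vec) \<Rightarrow> bool" where
  "onb d e \<longleftrightarrow> (\<forall>k<d. e k \<in> carrier_vec d)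
     \<and> (\<forall>k<d. \<forall>l<d. (\<Sum>i<d. cnj (e k $ i) * e l $ i) = (if k = l then 1 else 0))"

definition proj :: "complex vec \<Rightarrow> complex mat" where
  "proj v = mat (dim_vec v) (dim_vec v) (\<lambda>(i,j). v $ i * cnj (v $ j))"

definition zero_discord :: "nat \<Rightarrow> nat \<Rightarrow> complex mat \<Rightarrow> bool" where
  "zero_discord m n \<chi> \<longleftrightarrow> (\<exists>e p rB. onb m e \<and> (\<forall>k<m. 0 \<le> p k) \<and> (\<Sum>k<m. p k) = 1
      \<and> (\<forall>k<m. density_mat n (rB k))
      \<and> \<chi> = mat (m*n) (m*n) (\<lambda>ij. \<Sum>k<m. complex_of_real (p k) * kron (proj (e k)) (rB k) $$ ij))"

definition geometric_discord :: "nat \<Rightarrow> nat \<Rightarrow> complex mat \<Rightarrow> real" where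
  "geometric_discord m n \<rho> = Inf {Re (mtrace ((\<rho> - \<chi>) * (\<rho> - \<chi>))) | \<chi>. zero_discord m n \<chi>}"

definition xvec :: "nat \<Rightarrow> nat \<Rightarrow> (nat \<Rightarrow> complex mat) \<Rightarrow> complex mat \<Rightarrow> nat \<Rightarrow> real" where
  "xvec m n lamA \<rho> i = real m / 2 * Re (mtrace (kron (lamA i) (1\<^sub>m n) * \<rho>))"

definition yvec :: "nat \<Rightarrow> nat \<Rightarrow> (nat \<Rightarrow> complex mat) \<Rightarrow> complex mat \<Rightarrow> nat \<Rightarrow> real" where
  "yvec m n lamB \<rho> j = real n / 2 * Re (mtrace (kron (1\<^sub>m m) (lamB j) * \<rho>))"

definition tmat :: "nat \<Rightarrow> nat \<Rightarrow> (nat \<Rightarrow> complex mat) \<Rightarrow> (nat \<Rightarrow> complex mat) \<Rightarrow> complex mat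
    \<Rightarrow> nat \<Rightarrow> nat \<Rightarrow> real" where
  "tmat m n lamA lamB \<rho> i j = real (m * n) / 4 * Re (mtrace (kron (lamA i) (lamB j) * \<rho>))"

definition Gmat :: "nat \<Rightarrow> nat \<Rightarrow> (nat \<Rightarrow> complex mat) \<Rightarrow> (nat \<Rightarrow> complex mat) \<Rightarrow> complex mat
    \<Rightarrow> nat \<Rightarrow> nat \<Rightarrow> real" where
  "Gmat m n lamA lamB \<rho> i i' = xvec m n lamA \<rho> i * xvec m n lamA \<rho> i'
     + 2 / real n * (\<Sum>j < n^2 - 1. tmat m n lamA lamB \<rho> i j * tmat m n lamA lamB \<rho> i' j)"

text \<open>Coherence vector alpha of a state P on C^d: P = (1/d)(I + sum_i alpha_i lam_i), whose
  coordinates (lam orthonormal w.r.t. Tr(A B)/2) are alpha_i = (d/2) Tr(lam_i P).\<close>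
definition coherence_vec :: "nat \<Rightarrow> (nat \<Rightarrow> complex mat) \<Rightarrow> complex mat \<Rightarrow> nat \<Rightarrow> real" where
  "coherence_vec d lam P i = real d / 2 * Re (mtrace (lam i * P))"

definition mu_vec :: "nat \<Rightarrow> (nat \<Rightarrow> complex mat) \<Rightarrow> complex vec \<Rightarrow> nat \<Rightarrow> real" where
  "mu_vec m lamA v i = sqrt 2 / real m * coherence_vec m lamA (proj v) i"

end

theory Submission
  imports Defs "Jordan_Normal_Form.Determinant"
begin

lemma sum_split_mult:
  fixes m n :: nat
  shows "(\<Sum>i<m*n. f i) = (\<Sum>a<m. \<Sum>b<n. f (a*n+b))"
proof -
  have "(\<Sum>i<m*n. f i) = (\<Sum>a<m. \<Sum>i\<in>{a*n..<a*n+n}. f i)"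
    using sum.nat_group[of f n m] by simp
  also have "\<dots> = (\<Sum>a<m. \<Sum>b<n. f (a*n+b))"
  proof (rule sum.cong[OF refl])
    fix a
    show "(\<Sum>i\<in>{a*n..<a*n+n}. f i) = (\<Sum>b<n. f (a*n+b))"
      by (rule sum.reindex_bij_witness[of _ "\<lambda>b. a*n+b" "\<lambda>i. i - a*n"]) auto
  qed
  finally show ?thesis .
qed

lemma complete_from_orth:
  fixes U :: "nat \<Rightarrow> nat \<Rightarrow> complex"
  assumes "\<And>\<alpha> \<beta>. \<alpha><N \<Longrightarrow> \<beta><N \<Longrightarrow> (\<Sum>p<N. cnj (U p \<alpha>) * U p \<beta>) = (if \<alpha>=\<beta> then 1 else 0)"
    and "p < N" "q < N"
  shows "(\<Sum>\<alpha><N. U p \<alpha> * cnj (U q \<alpha>)) = (if p=q then 1 else 0)"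
proof -
  define A where "A = mat N N (\<lambda>(\<alpha>,p). cnj (U p \<alpha>))"
  define B where "B = mat N N (\<lambda>(p,\<beta>). U p \<beta>)"
  have AB: "A * B = 1\<^sub>m N"
    by (rule eq_matI) (auto simp: A_def B_def scalar_prod_def assms(1) atLeast0LessThan)
  have "B * A = 1\<^sub>m N"
    by (rule mat_mult_left_right_inverse[OF _ _ AB]) (auto simp: A_def B_def)
  then have "(B * A) $$ (p,q) = 1\<^sub>m N $$ (p,q)" by simp
  then show ?thesis using assms(2,3)
    by (simp add: A_def B_def scalar_prod_def atLeast0LessThan mult.commute)
qed

lemma idx_lt: "a < m \<Longrightarrow> b < (n::nat) \<Longrightarrow> a*n+b < m*n"
proof -
  assume "a < m" "b < n"
  then have "a*n+b < a*n+n" by simp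
  also have "\<dots> = (a+1)*n" by simp
  also have "\<dots> \<le> m*n" using \<open>a<m\<close> by (intro mult_right_mono) auto
  finally show ?thesis .
qed

lemma idx_div: "b < (n::nat) \<Longrightarrow> (a*n+b) div n = a" by simp
lemma idx_mod: "b < (n::nat) \<Longrightarrow> (a*n+b) mod n = b" by simp

lemma kron_dims[simp]: "dim_row (kron A B) = dim_row A * dim_row B" "dim_col (kron A B) = dim_col A * dim_col B"
  by (auto simp: kron_def)

lemma kron_index:
  assumes "A \<in> carrier_mat m m" "B \<in> carrier_mat n n" "a<m" "b<n" "c<m" "d<n"
  shows "kron A B $$ (a*n+b, c*n+d) = A$$(a,c) * B$$(b,d)"
  using assms idx_lt[of a m b n] idx_lt[of c m d n] by (auto simp: kron_def)

lemma kron_carrier: "A \<in> carrier_mat m m \<Longrightarrow> B \<in> carrier_mat n n \<Longrightarrow> kron A B \<in> carrier_mat (m*n) (m*n)"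
  by auto

lemma mtrace_mult:
  assumes "A \<in> carrier_mat N N" "B \<in> carrier_mat N N"
  shows "mtrace (A*B) = (\<Sum>i<N. \<Sum>j<N. A$$(i,j)*B$$(j,i))"
  using assms by (auto simp: mtrace_def scalar_prod_def atLeast0LessThan intro!: sum.cong)

lemma herm_trace_real:
  assumes "hermitian_mat N A" "hermitian_mat N B"
  shows "cnj (mtrace (A*B)) = mtrace (A*B)"
proof -
  have c: "A \<in> carrier_mat N N" "B \<in> carrier_mat N N" using assms unfolding hermitian_mat_def by blast+
  have hA: "\<forall>i<N. \<forall>j<N. A$$(i,j) = cnj (A$$(j,i))" and hB: "\<forall>i<N. \<forall>j<N. B$$(i,j) = cnj (B$$(j,i))"
    using assms unfolding hermitian_mat_def by blast+
  have "cnj (mtrace (A*B)) = (\<Sum>i<N. \<Sum>j<N. A$$(j,i)*B$$(i,j))"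
    unfolding mtrace_mult[OF c] cnj_sum
  proof (rule sum.cong[OF refl], rule sum.cong[OF refl])
    fix i j assume "i \<in> {..<N}" "j \<in> {..<N}"
    then have ij: "i < N" "j < N" by simp_all
    have "A$$(i,j) = cnj (A$$(j,i))" "B$$(j,i) = cnj (B$$(i,j))"
      using hA hB ij by blast+
    then show "cnj (A$$(i,j)*B$$(j,i)) = A$$(j,i)*B$$(i,j)" by (simp only: complex_cnj_mult complex_cnj_cnj)
  qed
  also have "\<dots> = mtrace (A*B)" unfolding mtrace_mult[OF c] by (rule sum.swap)
  finally show ?thesis .
qed

lemma real_of_cnj: "cnj z = z \<Longrightarrow> complex_of_real (Re z) = z"
  by (simp add: complex_eq_iff)

lemma sum4_swap: "(\<Sum>a\<in>A. \<Sum>b\<in>B. \<Sum>c\<in>C. \<Sum>d\<in>D. f a b c d) = (\<Sum>b\<in>B. \<Sum>d\<in>D. \<Sum>a\<in>A. \<Sum>c\<in>C. f a b c d)"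
proof -
  have "(\<Sum>a\<in>A. \<Sum>b\<in>B. \<Sum>c\<in>C. \<Sum>d\<in>D. f a b c d) = (\<Sum>b\<in>B. \<Sum>a\<in>A. \<Sum>c\<in>C. \<Sum>d\<in>D. f a b c d)"
    by (rule sum.swap)
  also have "\<dots> = (\<Sum>b\<in>B. \<Sum>a\<in>A. \<Sum>d\<in>D. \<Sum>c\<in>C. f a b c d)"
    by (rule sum.cong[OF refl], rule sum.cong[OF refl], rule sum.swap)
  also have "\<dots> = (\<Sum>b\<in>B. \<Sum>d\<in>D. \<Sum>a\<in>A. \<Sum>c\<in>C. f a b c d)"
    by (rule sum.cong[OF refl], rule sum.swap)
  finally show ?thesis .
qed

definition sig :: "nat \<Rightarrow> nat \<Rightarrow> complex mat \<Rightarrow> (nat\<Rightarrow>nat\<Rightarrow>complex) \<Rightarrow> nat \<Rightarrow> nat \<Rightarrow> complex" where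
  "sig m n \<rho> M d b = (\<Sum>a<m. \<Sum>c<m. M a c * \<rho> $$ (c*n+d, a*n+b))"

definition HS :: "nat \<Rightarrow> (nat\<Rightarrow>nat\<Rightarrow>complex) \<Rightarrow> (nat\<Rightarrow>nat\<Rightarrow>complex) \<Rightarrow> complex" where
  "HS n X Y = (\<Sum>b<n. \<Sum>d<n. X b d * Y d b)"

lemma trace_kron:
  assumes A: "A \<in> carrier_mat m m" and B: "B \<in> carrier_mat n n" and r: "\<rho> \<in> carrier_mat (m*n) (m*n)"
  shows "mtrace (kron A B * \<rho>) = (\<Sum>b<n. \<Sum>d<n. B$$(b,d) * sig m n \<rho> (\<lambda>a c. A$$(a,c)) d b)"
proof -
  have "mtrace (kron A B * \<rho>) = (\<Sum>i<m*n. \<Sum>j<m*n. kron A B $$(i,j)*\<rho>$$(j,i))"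
    by (rule mtrace_mult[OF kron_carrier[OF A B] r])
  also have "\<dots> = (\<Sum>a<m. \<Sum>b<n. \<Sum>c<m. \<Sum>d<n. A$$(a,c) * B$$(b,d) * \<rho>$$(c*n+d, a*n+b))"
    unfolding sum_split_mult
    by (intro sum.cong refl) (simp add: kron_index[OF A B])
  also have "\<dots> = (\<Sum>b<n. \<Sum>d<n. \<Sum>a<m. \<Sum>c<m. A$$(a,c) * B$$(b,d) * \<rho>$$(c*n+d, a*n+b))"
    by (rule sum4_swap)
  also have "\<dots> = (\<Sum>b<n. \<Sum>d<n. B$$(b,d) * sig m n \<rho> (\<lambda>a c. A$$(a,c)) d b)"
    by (simp add: sig_def sum_distrib_left mult_ac)
  finally show ?thesis .
qed

lemma su_herm: "su_generators d lam \<Longrightarrow> i < d^2-1 \<Longrightarrow> hermitian_mat d (lam i)"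
  unfolding su_generators_def by blast
lemma su_carrier: "su_generators d lam \<Longrightarrow> i < d^2-1 \<Longrightarrow> lam i \<in> carrier_mat d d"
  using su_herm unfolding hermitian_mat_def by blast
lemma su_entry: "su_generators d lam \<Longrightarrow> i < d^2-1 \<Longrightarrow> a < d \<Longrightarrow> c < d \<Longrightarrow> lam i $$ (a,c) = cnj (lam i $$ (c,a))"
  using su_herm unfolding hermitian_mat_def by blast
lemma su_tr: "su_generators d lam \<Longrightarrow> i < d^2-1 \<Longrightarrow> (\<Sum>a<d. lam i $$ (a,a)) = 0"
  using su_carrier[of d lam i] unfolding su_generators_def mtrace_def by auto
lemma su_orth: "su_generators d lam \<Longrightarrow> i < d^2-1 \<Longrightarrow> j < d^2-1 \<Longrightarrow>
   (\<Sum>a<d. \<Sum>c<d. lam i $$ (a,c) * lam j $$ (c,a)) = (if i = j then 2 else 0)"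
  using mtrace_mult[OF su_carrier[of d lam i] su_carrier[of d lam j]] unfolding su_generators_def by auto

lemma fierz:
  fixes lam :: "nat \<Rightarrow> complex mat"
  assumes d: "0<d" and su: "su_generators d lam" and "a<d" "c<d" "b<d" "e<d"
  shows "(\<Sum>i<d^2-1. lam i $$(a,c) * lam i $$(b,e)) =
    2*(if a=e \<and> c=b then 1 else 0) - 2/of_nat d*(if a=c \<and> b=e then 1 else 0)"
proof -
  define s where "s = complex_of_real (sqrt (real d))"
  define r where "r = complex_of_real (sqrt 2)"
  have ss: "s*s = of_nat d" unfolding s_def
    unfolding of_real_mult[symmetric] by simp
  have rr: "r*r = 2" unfolding r_def
    unfolding of_real_mult[symmetric] by simp
  have s0: "s \<noteq> 0" using d unfolding s_def by simp
  have r0: "r \<noteq> 0" unfolding r_def by simp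
  have cs: "cnj s = s" "cnj r = r" unfolding s_def r_def by simp_all
  define N where "N = d*d"
  have N: "d^2 - 1 = N - 1" "N = Suc (N-1)" using d by (auto simp: N_def power2_eq_square)
  define U where "U p \<alpha> = (if \<alpha>=0 then (if p div d = p mod d then 1/s else 0)
      else lam (\<alpha>-1) $$ (p div d, p mod d) / r)" for p \<alpha>
  have orth: "(\<Sum>p<N. cnj (U p \<alpha>) * U p \<beta>) = (if \<alpha>=\<beta> then 1 else 0)" if ab: "\<alpha><N" "\<beta><N" for \<alpha> \<beta>
  proof -
    have sp: "(\<Sum>p<N. cnj (U p \<alpha>) * U p \<beta>) = (\<Sum>x<d. \<Sum>y<d. cnj (U (x*d+y) \<alpha>) * U (x*d+y) \<beta>)"
      unfolding N_def by (rule sum_split_mult)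
    consider "\<alpha> = 0" "\<beta> = 0" | i where "\<alpha> = 0" "\<beta> = Suc i" "i < d^2-1"
      | i where "\<alpha> = Suc i" "\<beta> = 0" "i < d^2-1" | i j where "\<alpha> = Suc i" "\<beta> = Suc j" "i < d^2-1" "j<d^2-1"
      using ab N by (cases \<alpha>; cases \<beta>) auto
    then show ?thesis
    proof cases
      case 1
      have "(\<Sum>x<d. \<Sum>y<d. cnj (U (x*d+y) \<alpha>) * U (x*d+y) \<beta>) = (\<Sum>x<d. \<Sum>y<d. if x = y then 1/(s*s) else 0)"
        using 1 cs by (intro sum.cong refl) (auto simp: U_def)
      also have "\<dots> = of_nat d / (s*s)" by (simp add: sum.delta)
      finally show ?thesis using sp 1 ss d by simp
    next
      case 2
      have "(\<Sum>x<d. \<Sum>y<d. cnj (U (x*d+y) \<alpha>) * U (x*d+y) \<beta>) = (\<Sum>x<d. \<Sum>y<d. if x = y then lam i $$ (x,y) / (s*r) else 0)"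
        using 2 cs by (intro sum.cong refl) (auto simp: U_def)
      also have "\<dots> = (\<Sum>x<d. lam i $$ (x,x)) / (s*r)" by (simp add: sum.delta sum_divide_distrib)
      finally show ?thesis using sp 2 su_tr[OF su 2(3)] by simp
    next
      case 3
      have "(\<Sum>x<d. \<Sum>y<d. cnj (U (x*d+y) \<alpha>) * U (x*d+y) \<beta>) = (\<Sum>x<d. \<Sum>y<d. if x = y then cnj (lam i $$ (x,y)) / (s*r) else 0)"
        using 3 cs by (intro sum.cong refl) (auto simp: U_def)
      also have "\<dots> = cnj (\<Sum>x<d. lam i $$ (x,x)) / (s*r)" using cs by (simp add: sum.delta sum_divide_distrib)
      finally show ?thesis using sp 3 su_tr[OF su 3(3)] by simp
    next
      case 4
      have "(\<Sum>x<d. \<Sum>y<d. cnj (U (x*d+y) \<alpha>) * U (x*d+y) \<beta>) = (\<Sum>x<d. \<Sum>y<d. lam i $$ (y,x) * lam j $$ (x,y) / (r*r))"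
      proof (rule sum.cong[OF refl], rule sum.cong[OF refl])
        fix x y assume "x \<in> {..<d}" "y \<in> {..<d}"
        then have "lam i $$ (x,y) = cnj (lam i $$ (y,x))" by (intro su_entry[OF su 4(3)]) simp_all
        then show "cnj (U (x*d+y) \<alpha>) * U (x*d+y) \<beta> = lam i $$ (y,x) * lam j $$ (x,y) / (r*r)"
          using 4 cs \<open>y \<in> {..<d}\<close> by (simp add: U_def)
      qed
      also have "\<dots> = (\<Sum>y<d. \<Sum>x<d. lam i $$ (y,x) * lam j $$ (x,y)) / (r*r)"
        by (subst sum.swap) (simp add: sum_divide_distrib)
      also have "\<dots> = (if i = j then 2 else 0) / 2" using su_orth[OF su 4(3) 4(4)] rr by simp
      finally show ?thesis using sp 4 by (auto split: if_splits)
    qed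
  qed
  have p: "a*d+c < N" "e*d+b < N" using idx_lt \<open>a<d\<close> \<open>c<d\<close> \<open>e<d\<close> \<open>b<d\<close> unfolding N_def by auto
  have C: "(\<Sum>\<alpha><N. U (a*d+c) \<alpha> * cnj (U (e*d+b) \<alpha>)) = (if a*d+c = e*d+b then 1 else 0)"
    by (rule complete_from_orth[OF orth p])
  have eq: "(a*d+c = e*d+b) = (a = e \<and> c = b)"
    using \<open>c<d\<close> \<open>b<d\<close> by (metis idx_div idx_mod)
  have "(\<Sum>\<alpha><N. U (a*d+c) \<alpha> * cnj (U (e*d+b) \<alpha>)) = U (a*d+c) 0 * cnj (U (e*d+b) 0) +
      (\<Sum>i<N-1. U (a*d+c) (Suc i) * cnj (U (e*d+b) (Suc i)))"
    by (subst N(2), subst sum.lessThan_Suc_shift) simp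
  also have "U (a*d+c) 0 * cnj (U (e*d+b) 0) = (if a=c \<and> b=e then 1 else 0) / of_nat d"
    using \<open>c<d\<close> \<open>b<d\<close> cs ss by (auto simp: U_def)
  also have "(\<Sum>i<N-1. U (a*d+c) (Suc i) * cnj (U (e*d+b) (Suc i))) = (\<Sum>i<d^2-1. lam i $$(a,c) * lam i $$(b,e)) / 2"
    unfolding N(1)[symmetric] sum_divide_distrib
  proof (rule sum.cong[OF refl])
    fix i assume "i \<in> {..<d^2-1}"
    then have "lam i $$ (e,b) = cnj (lam i $$ (b,e))" using \<open>b<d\<close> \<open>e<d\<close> by (intro su_entry[OF su]) simp_all
    then show "U (a*d+c) (Suc i) * cnj (U (e*d+b) (Suc i)) = lam i $$(a,c) * lam i $$(b,e) / 2"
      using \<open>c<d\<close> \<open>b<d\<close> cs rr by (simp add: U_def)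
  qed
  finally have "(if a=c \<and> b=e then 1 else 0) / of_nat d + (\<Sum>i<d^2-1. lam i $$(a,c) * lam i $$(b,e)) / 2
      = (if a = e \<and> c = b then 1 else 0)" using C eq by simp
  then show ?thesis using d by (auto simp: field_simps split: if_splits)
qed

lemma sum4_swap2: "(\<Sum>a\<in>A. \<Sum>b\<in>B. \<Sum>c\<in>C. \<Sum>d\<in>D. f a b c d) = (\<Sum>c\<in>C. \<Sum>d\<in>D. \<Sum>a\<in>A. \<Sum>b\<in>B. f a b c d)"
proof -
  have "(\<Sum>a\<in>A. \<Sum>b\<in>B. \<Sum>c\<in>C. \<Sum>d\<in>D. f a b c d) = (\<Sum>a\<in>A. \<Sum>c\<in>C. \<Sum>b\<in>B. \<Sum>d\<in>D. f a b c d)"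
    by (rule sum.cong[OF refl], rule sum.swap)
  also have "\<dots> = (\<Sum>c\<in>C. \<Sum>a\<in>A. \<Sum>b\<in>B. \<Sum>d\<in>D. f a b c d)" by (rule sum.swap)
  also have "\<dots> = (\<Sum>c\<in>C. \<Sum>a\<in>A. \<Sum>d\<in>D. \<Sum>b\<in>B. f a b c d)"
    by (rule sum.cong[OF refl], rule sum.cong[OF refl], rule sum.swap)
  also have "\<dots> = (\<Sum>c\<in>C. \<Sum>d\<in>D. \<Sum>a\<in>A. \<Sum>b\<in>B. f a b c d)"
    by (rule sum.cong[OF refl], rule sum.swap)
  finally show ?thesis .
qed

lemma if_fact: "(x::complex) * (2*(if P then 1 else 0) - k*(if Q then 1 else 0)) = 2*(if P then x else 0) - k*(if Q then x else 0)"
  by (cases P; cases Q) (simp_all add: algebra_simps)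

lemma delta_conj: "a < (d::nat) \<Longrightarrow> (\<Sum>x<d. (if a = x \<and> P then f x else 0)) = (if P then f a else (0::complex))"
  by (cases P) (simp_all add: sum.delta)
lemma delta_conj2: "a < (d::nat) \<Longrightarrow> (\<Sum>x<d. (if P \<and> a = x then f x else 0)) = (if P then f a else (0::complex))"
  by (cases P) (simp_all add: sum.delta)
lemma delta_r: "a < (d::nat) \<Longrightarrow> (\<Sum>x<d. (if x = a then f x else 0)) = (f a::complex)"
  by (simp add: sum.delta)

lemma fierz_contract:
  fixes lam :: "nat \<Rightarrow> complex mat" and F H :: "nat \<Rightarrow> nat \<Rightarrow> complex"
  assumes d: "0<d" and su: "su_generators d lam"
  shows "(\<Sum>i<d^2-1. (\<Sum>a<d. \<Sum>c<d. lam i$$(a,c) * F a c) * (\<Sum>a<d. \<Sum>c<d. lam i$$(a,c) * H a c))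
    = 2 * (\<Sum>a<d. \<Sum>c<d. F a c * H c a) - 2/of_nat d * ((\<Sum>a<d. F a a) * (\<Sum>a<d. H a a))"
proof -
  let ?I = "{..<d^2-1}"
  have "(\<Sum>i<d^2-1. (\<Sum>a<d. \<Sum>c<d. lam i$$(a,c) * F a c) * (\<Sum>a<d. \<Sum>c<d. lam i$$(a,c) * H a c))
     = (\<Sum>i\<in>?I. \<Sum>a<d. \<Sum>a'<d. \<Sum>c<d. \<Sum>c'<d. (lam i$$(a,c) * F a c) * (lam i$$(a',c') * H a' c'))"
    by (simp only: sum_product)
  also have "\<dots> = (\<Sum>a<d. \<Sum>a'<d. \<Sum>c<d. \<Sum>c'<d. \<Sum>i\<in>?I. (lam i$$(a,c) * F a c) * (lam i$$(a',c') * H a' c'))"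
    by (simp only: sum.swap[of _ ?I])
  also have "\<dots> = (\<Sum>a<d. \<Sum>a'<d. \<Sum>c<d. \<Sum>c'<d. F a c * H a' c' *
       (2*(if a=c' \<and> c=a' then 1 else 0) - 2/of_nat d*(if a=c \<and> a'=c' then 1 else 0)))"
  proof (intro sum.cong refl)
    fix a a' c c' assume "a \<in> {..<d}" "a' \<in> {..<d}" "c \<in> {..<d}" "c' \<in> {..<d}"
    then have "(\<Sum>i\<in>?I. lam i$$(a,c) * lam i$$(a',c')) =
      2*(if a=c' \<and> c=a' then 1 else 0) - 2/of_nat d*(if a=c \<and> a'=c' then 1 else 0)"
      by (intro fierz[OF d su]) auto
    then show "(\<Sum>i\<in>?I. (lam i$$(a,c) * F a c) * (lam i$$(a',c') * H a' c')) = F a c * H a' c' *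
       (2*(if a=c' \<and> c=a' then 1 else 0) - 2/of_nat d*(if a=c \<and> a'=c' then 1 else 0))"
      by (simp add: sum_distrib_left[symmetric] mult_ac)
  qed
  also have "\<dots> = (\<Sum>a<d. \<Sum>a'<d. \<Sum>c<d. \<Sum>c'<d. 2 * (if a = c' \<and> c=a' then F a c * H a' c' else 0)
      - 2/of_nat d * (if a = c \<and> a'=c' then F a c * H a' c' else 0))"
  proof (intro sum.cong refl)
    fix a a' c c'
    show "F a c * H a' c' * (2*(if a=c' \<and> c=a' then 1 else 0) - 2/of_nat d*(if a=c \<and> a'=c' then 1 else 0))
      = 2 * (if a = c' \<and> c=a' then F a c * H a' c' else 0)
      - 2/of_nat d * (if a = c \<and> a'=c' then F a c * H a' c' else 0)"
      by (rule if_fact)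
  qed
  also have "\<dots> = (\<Sum>a<d. \<Sum>a'<d. \<Sum>c<d. \<Sum>c'<d. 2 * (if a = c' \<and> c=a' then F a c * H a' c' else 0))
      - (\<Sum>a<d. \<Sum>a'<d. \<Sum>c<d. \<Sum>c'<d. 2/of_nat d * (if a = c \<and> a'=c' then F a c * H a' c' else 0))"
    by (simp only: sum_subtractf)
  also have "\<dots> = 2 * (\<Sum>a<d. \<Sum>c<d. F a c * H c a) - 2/of_nat d * ((\<Sum>a<d. F a a) * (\<Sum>a<d. H a a))"
  proof -
    have 1: "(\<Sum>a<d. \<Sum>a'<d. \<Sum>c<d. \<Sum>c'<d. 2 * (if a = c' \<and> c=a' then F a c * H a' c' else 0))
      = (\<Sum>a<d. \<Sum>a'<d. 2 * (F a a' * H a' a))"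
    proof (intro sum.cong refl)
      fix a a' assume "a \<in> {..<d}" "a' \<in> {..<d}"
      then show "(\<Sum>c<d. \<Sum>c'<d. 2 * (if a = c' \<and> c=a' then F a c * H a' c' else 0)) = 2 * (F a a' * H a' a)"
        by (simp add: sum_distrib_left[symmetric] delta_conj delta_r)
    qed
    have 2: "(\<Sum>a<d. \<Sum>a'<d. \<Sum>c<d. \<Sum>c'<d. 2/of_nat d * (if a = c \<and> a'=c' then F a c * H a' c' else 0))
      = (\<Sum>a<d. \<Sum>a'<d. 2/of_nat d * (F a a * H a' a'))"
    proof (intro sum.cong refl)
      fix a a' assume "a \<in> {..<d}" "a' \<in> {..<d}"
      then show "(\<Sum>c<d. \<Sum>c'<d. 2/of_nat d * (if a = c \<and> a'=c' then F a c * H a' c' else 0)) = 2/of_nat d * (F a a * H a' a')"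
        by (simp add: sum_distrib_left[symmetric] sum_divide_distrib[symmetric] delta_conj delta_conj2 delta_r)
    qed
    have 3: "(\<Sum>a<d. \<Sum>a'<d. 2 * (F a a' * H a' a)) = 2 * (\<Sum>a<d. \<Sum>c<d. F a c * H c a)"
      by (simp only: sum_distrib_left)
    have 4: "(\<Sum>a<d. \<Sum>a'<d. 2/of_nat d * (F a a * H a' a')) = 2/of_nat d * ((\<Sum>a<d. F a a) * (\<Sum>a<d. H a a))"
      by (simp only: sum_distrib_left sum_distrib_right mult.assoc) (rule sum.swap)
    show ?thesis unfolding 1 2 3 4 ..
  qed
  finally show ?thesis .
qed

lemma dsum_r: "b < (n::nat) \<Longrightarrow> (\<Sum>y<n. f y * (if y = b then 1 else 0)) = (f b :: complex)"
proof -
  assume "b<n"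
  have "(\<Sum>y<n. f y * (if y = b then 1 else 0)) = (\<Sum>y<n. if y = b then f y else 0)"
    by (rule sum.cong) auto
  also have "\<dots> = (if b \<in> {..<n} then f b else 0)" by (simp add: sum.delta)
  finally show ?thesis using \<open>b<n\<close> by simp
qed
lemma dsum_l: "b < (n::nat) \<Longrightarrow> (\<Sum>y<n. (if y = b then 1 else 0) * f y) = (f b :: complex)"
  using dsum_r[of b n f] by (simp add: mult.commute)

lemma dsum_l2: "b < (n::nat) \<Longrightarrow> (\<Sum>y<n. (if y = b then c else 0) * f y) = (c * f b :: complex)"
  using dsum_l[of b n "\<lambda>y. c * f y"] by (simp add: if_distrib[where f="\<lambda>v. v * _"] cong: if_cong)

lemma onb_complete:
  assumes "onb m e" "a < m" "c < m"
  shows "(\<Sum>k<m. e k $ a * cnj (e k $ c)) = (if a = c then 1 else 0)"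
proof -
  have o: "(\<Sum>p<m. cnj (e \<alpha> $ p) * e \<beta> $ p) = (if \<alpha>=\<beta> then 1 else 0)" if "\<alpha><m" "\<beta><m" for \<alpha> \<beta>
    using assms(1) that unfolding onb_def by blast
  show ?thesis
    by (rule complete_from_orth[where U="\<lambda>p \<alpha>. e \<alpha> $ p", OF o assms(2,3)])
qed

lemma herm_kron:
  assumes A: "hermitian_mat m A" and B: "hermitian_mat n B"
  shows "hermitian_mat (m*n) (kron A B)"
proof -
  have cA: "A \<in> carrier_mat m m" and cB: "B \<in> carrier_mat n n" using A B unfolding hermitian_mat_def by blast+
  have hA: "\<forall>i<m. \<forall>j<m. A$$(i,j) = cnj (A$$(j,i))" and hB: "\<forall>i<n. \<forall>j<n. B$$(i,j) = cnj (B$$(j,i))"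
    using A B unfolding hermitian_mat_def by blast+
  have "kron A B $$ (i,j) = cnj (kron A B $$ (j,i))" if "i < m*n" "j < m*n" for i j
  proof -
    have n: "0 < n" using that by (cases n) auto
    have lt: "i div n < m" "j div n < m" "i mod n < n" "j mod n < n"
      using that n by (auto simp: less_mult_imp_div_less)
    have "A$$(i div n, j div n) = cnj (A$$(j div n, i div n))" using hA lt by blast
    moreover have "B$$(i mod n, j mod n) = cnj (B$$(j mod n, i mod n))" using hB lt by blast
    ultimately show ?thesis using that cA cB unfolding kron_def
      by (simp only: index_mat dim_row_mat dim_col_mat carrier_matD split complex_cnj_mult)
  qed
  then show ?thesis unfolding hermitian_mat_def using cA cB by (auto simp: kron_def)
qed

lemma proj_herm: "dim_vec v = d \<Longrightarrow> hermitian_mat d (proj v)"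
  unfolding hermitian_mat_def proj_def by auto

lemma sig_sum:
  assumes "finite K"
  shows "sig m n \<rho> (\<lambda>a c. \<Sum>k\<in>K. f k a c) d b = (\<Sum>k\<in>K. sig m n \<rho> (f k) d b)"
proof -
  have "sig m n \<rho> (\<lambda>a c. \<Sum>k\<in>K. f k a c) d b = (\<Sum>a<m. \<Sum>c<m. \<Sum>k\<in>K. f k a c * \<rho> $$ (c*n+d, a*n+b))"
    unfolding sig_def by (simp only: sum_distrib_right)
  also have "\<dots> = (\<Sum>a<m. \<Sum>k\<in>K. \<Sum>c<m. f k a c * \<rho> $$ (c*n+d, a*n+b))"
    by (rule sum.cong[OF refl], rule sum.swap)
  also have "\<dots> = (\<Sum>k\<in>K. \<Sum>a<m. \<Sum>c<m. f k a c * \<rho> $$ (c*n+d, a*n+b))"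
    by (rule sum.swap)
  finally show ?thesis unfolding sig_def .
qed

lemma sig_lin:
  "sig m n \<rho> (\<lambda>a c. x * M a c + y * N a c) d b = x * sig m n \<rho> M d b + y * sig m n \<rho> N d b"
  unfolding sig_def by (simp add: sum.distrib sum_distrib_left algebra_simps)

lemma sig_herm:
  assumes rh: "\<forall>i<m*n. \<forall>j<m*n. \<rho>$$(i,j) = cnj (\<rho>$$(j,i))"
    and Mh: "\<forall>a<m. \<forall>c<m. M a c = cnj (M c a)" and "b<n" "d<n"
  shows "sig m n \<rho> M d b = cnj (sig m n \<rho> M b d)"
proof -
  have "cnj (sig m n \<rho> M b d) = (\<Sum>a<m. \<Sum>c<m. cnj (M a c) * cnj (\<rho> $$ (c*n+b, a*n+d)))"
    unfolding sig_def by simp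
  also have "\<dots> = (\<Sum>a<m. \<Sum>c<m. M c a * \<rho> $$ (a*n+d, c*n+b))"
  proof (rule sum.cong[OF refl], rule sum.cong[OF refl])
    fix a c assume "a \<in> {..<m}" "c \<in> {..<m}"
    then have "a<m" "c<m" by auto
    then have "M c a = cnj (M a c)" "\<rho> $$ (a*n+d, c*n+b) = cnj (\<rho> $$ (c*n+b, a*n+d))"
      using Mh rh idx_lt[of a m d n] idx_lt[of c m b n] \<open>b<n\<close> \<open>d<n\<close> by blast+
    then show "cnj (M a c) * cnj (\<rho> $$ (c*n+b, a*n+d)) = M c a * \<rho> $$ (a*n+d, c*n+b)" by simp
  qed
  also have "\<dots> = sig m n \<rho> M d b" unfolding sig_def by (rule sum.swap)
  finally show ?thesis by simp
qed

lemma HS_sym: "HS n X Y = HS n Y X"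
  unfolding HS_def by (subst sum.swap) (simp add: mult.commute)

lemma HS_nonneg:
  assumes "\<forall>b<n. \<forall>d<n. Z d b = cnj (Z b d)"
  shows "0 \<le> Re (HS n Z Z)"
proof -
  have "HS n Z Z = (\<Sum>b<n. \<Sum>d<n. Z b d * cnj (Z b d))"
    unfolding HS_def
  proof (rule sum.cong[OF refl], rule sum.cong[OF refl])
    fix b d assume "b \<in> {..<n}" "d \<in> {..<n}"
    then have "Z d b = cnj (Z b d)" using assms by blast
    then show "Z b d * Z d b = Z b d * cnj (Z b d)" by simp
  qed
  also have "Re \<dots> = (\<Sum>b<n. \<Sum>d<n. (Re (Z b d))^2 + (Im (Z b d))^2)"
    by (simp add: complex_mult_cnj)
  finally show ?thesis by (simp add: sum_nonneg)
qed


definition TP :: "nat \<Rightarrow> complex mat \<Rightarrow> complex mat \<Rightarrow> complex" where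
  "TP N X Y = (\<Sum>i<N. \<Sum>j<N. X$$(i,j) * Y$$(j,i))"

lemma TP_sym: "TP N X Y = TP N Y X"
  unfolding TP_def by (subst sum.swap) (simp add: mult.commute)

lemma TP_kron:
  assumes "A \<in> carrier_mat m m" "A' \<in> carrier_mat m m" "B \<in> carrier_mat n n" "B' \<in> carrier_mat n n"
  shows "TP (m*n) (kron A B) (kron A' B') = (\<Sum>a<m. \<Sum>c<m. A$$(a,c) * A'$$(c,a)) * HS n (\<lambda>b d. B$$(b,d)) (\<lambda>b d. B'$$(b,d))"
proof -
  have "TP (m*n) (kron A B) (kron A' B') = (\<Sum>a<m. \<Sum>b<n. \<Sum>c<m. \<Sum>d<n. (A$$(a,c) * A'$$(c,a)) * (B$$(b,d) * B'$$(d,b)))"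
    unfolding TP_def sum_split_mult
    by (intro sum.cong refl) (simp add: kron_index[OF assms(1,3)] kron_index[OF assms(2,4)] mult_ac)
  also have "\<dots> = (\<Sum>a<m. \<Sum>c<m. \<Sum>b<n. \<Sum>d<n. (A$$(a,c) * A'$$(c,a)) * (B$$(b,d) * B'$$(d,b)))"
    by (rule sum.cong[OF refl], rule sum.swap)
  also have "\<dots> = (\<Sum>a<m. \<Sum>c<m. A$$(a,c) * A'$$(c,a)) * HS n (\<lambda>b d. B$$(b,d)) (\<lambda>b d. B'$$(b,d))"
    unfolding HS_def by (simp only: sum_distrib_right) (simp only: sum_distrib_left)
  finally show ?thesis .
qed

lemma TP_trace: "A \<in> carrier_mat N N \<Longrightarrow> B \<in> carrier_mat N N \<Longrightarrow> mtrace (A*B) = TP N A B"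
  unfolding TP_def by (rule mtrace_mult)

lemma HS_expand:
  "HS n (\<lambda>b d. X b d - c * Y b d) (\<lambda>b d. X b d - c * Y b d) = HS n X X - 2 * c * HS n Y X + c^2 * HS n Y Y"
proof -
  have "HS n (\<lambda>b d. X b d - c * Y b d) (\<lambda>b d. X b d - c * Y b d) = HS n X X - c * HS n X Y - c * HS n Y X + c^2 * HS n Y Y"
    unfolding HS_def by (simp add: algebra_simps power2_eq_square sum_subtractf sum.distrib sum_distrib_left)
  then show ?thesis using HS_sym[of n X Y] by simp
qed

lemma psd_zero:
  fixes X :: "nat \<Rightarrow> nat \<Rightarrow> complex"
  assumes herm: "\<forall>b<n. \<forall>d<n. X d b = cnj (X b d)"
    and psd: "\<And>w. 0 \<le> Re (\<Sum>b<n. \<Sum>d<n. cnj (w b) * X b d * w d)"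
    and tr: "(\<Sum>b<n. X b b) = 0" and bd: "b<n" "d<n"
  shows "X b d = 0"
proof -
  have qd: "(\<Sum>x<n. \<Sum>y<n. cnj (w x) * X x y * w y) = X u u" if "u<n" "w = (\<lambda>y. if y = u then 1 else 0)" for u w
  proof -
    have "(\<Sum>x<n. \<Sum>y<n. cnj (w x) * X x y * w y) = (\<Sum>x<n. cnj (w x) * X x u)"
      using that by (intro sum.cong refl) (simp add: dsum_r mult.assoc)
    also have "\<dots> = X u u"
    proof -
      have cw: "cnj (if x = u then 1 else 0) = (if x = u then 1 else (0::complex))" for x by simp
      show ?thesis using that by (simp add: dsum_l cw)
    qed
    finally show ?thesis .
  qed
  have diag_nn: "0 \<le> Re (X u u)" if "u<n" for u
    using psd[of "\<lambda>y. if y = u then 1 else 0"] qd[OF that refl] by simp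
  have diag_real: "Im (X u u) = 0" if "u<n" for u
  proof -
    have "X u u = cnj (X u u)" using herm that by blast
    then show ?thesis by (metis cnj.simps(2) neg_equal_zero)
  qed
  have "(\<Sum>u<n. Re (X u u)) = 0" using tr by (metis Re_sum zero_complex.simps(1))
  then have diag_re: "Re (X u u) = 0" if "u<n" for u
    using diag_nn that by (subst (asm) sum_nonneg_eq_0_iff) auto
  have diag: "X u u = 0" if "u<n" for u using diag_re[OF that] diag_real[OF that] by (simp add: complex_eq_iff)
  show ?thesis
  proof (cases "b = d")
    case True then show ?thesis using diag bd by simp
  next
    case False
    define z where "z = X b d"
    define t where "t = - cnj z"
    define w where "w = (\<lambda>y. (if y = b then 1 else 0) + (if y = d then t else (0::complex)))"
    have Xdb: "X d b = cnj z" using herm bd unfolding z_def by blast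
    have inner: "(\<Sum>y<n. X x y * w y) = X x b + X x d * t" for x
      unfolding w_def using bd
      by (simp add: distrib_left sum.distrib dsum_r mult.assoc[symmetric]
           flip: mult.assoc) (simp add: if_distrib[of "\<lambda>v. X x _ * v"] sum.delta cong: if_cong)
    have "(\<Sum>x<n. \<Sum>y<n. cnj (w x) * X x y * w y) = (\<Sum>x<n. cnj (w x) * (X x b + X x d * t))"
      by (simp add: mult.assoc sum_distrib_left[symmetric] inner)
    also have "\<dots> = (X b b + X b d * t) + cnj t * (X d b + X d d * t)"
    proof -
      have c1: "cnj (if x = b then 1 else 0) = (if x = b then 1 else (0::complex))" for x by simp
      have c2: "cnj (if x = d then t else 0) = (if x = d then cnj t else (0::complex))" for x by simp
      show ?thesis unfolding w_def using bd
        by (simp only: complex_cnj_add c1 c2 distrib_right sum.distrib dsum_l dsum_l2)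
    qed
    also have "\<dots> = - 2 * (z * cnj z)" using diag bd Xdb unfolding t_def z_def by simp
    finally have "0 \<le> Re (- 2 * (z * cnj z))" using psd[of w] by simp
    then have "Re (z * cnj z) \<le> 0" by simp
    then have "(Re z)^2 + (Im z)^2 \<le> 0" by (simp add: complex_mult_cnj)
    then have "Re z = 0" "Im z = 0" by (auto simp: add_nonneg_eq_0_iff sum_power2_le_zero_iff)
    then show ?thesis unfolding z_def by (simp add: complex_eq_iff)
  qed
qed

lemma TP_minus:
  assumes "A \<in> carrier_mat N N" "B \<in> carrier_mat N N"
  shows "TP N (A - B) (A - B) = TP N A A - 2 * TP N B A + TP N B B"
proof -
  have "TP N (A - B) (A - B) = (\<Sum>i<N. \<Sum>j<N. A$$(i,j)*A$$(j,i) - A$$(i,j)*B$$(j,i) - B$$(i,j)*A$$(j,i) + B$$(i,j)*B$$(j,i))"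
    unfolding TP_def using assms by (intro sum.cong refl) (auto simp: algebra_simps)
  also have "\<dots> = TP N A A - TP N A B - TP N B A + TP N B B"
    unfolding TP_def by (simp only: sum.distrib sum_subtractf)
  finally show ?thesis using TP_sym[of N A B] by simp
qed

lemma TP_lin_left:
  assumes "finite K" "\<And>i j. i<N \<Longrightarrow> j<N \<Longrightarrow> X$$(i,j) = (\<Sum>k\<in>K. c k * Y k $$ (i,j))"
  shows "TP N X Z = (\<Sum>k\<in>K. c k * TP N (Y k) Z)"
proof -
  have "TP N X Z = (\<Sum>i<N. \<Sum>j<N. \<Sum>k\<in>K. c k * (Y k $$ (i,j) * Z$$(j,i)))"
    unfolding TP_def using assms(2) by (intro sum.cong refl) (simp add: sum_distrib_right mult.assoc)
  also have "\<dots> = (\<Sum>i<N. \<Sum>k\<in>K. \<Sum>j<N. c k * (Y k $$ (i,j) * Z$$(j,i)))"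
    by (rule sum.cong[OF refl], rule sum.swap)
  also have "\<dots> = (\<Sum>k\<in>K. \<Sum>i<N. \<Sum>j<N. c k * (Y k $$ (i,j) * Z$$(j,i)))"
    by (rule sum.swap)
  also have "\<dots> = (\<Sum>k\<in>K. c k * TP N (Y k) Z)"
    unfolding TP_def by (simp only: sum_distrib_left)
  finally show ?thesis .
qed

lemma sig_cong: "(\<And>a c. a<m \<Longrightarrow> c<m \<Longrightarrow> M a c = M' a c) \<Longrightarrow> sig m n \<rho> M d b = sig m n \<rho> M' d b"
  unfolding sig_def by (intro sum.cong refl) auto

locale GD =
  fixes m n :: nat and lamA lamB :: "nat \<Rightarrow> complex mat" and \<rho> :: "complex mat"
  assumes m0: "0 < m" and n0: "0 < n" and sA: "su_generators m lamA" and sB: "su_generators n lamB"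
    and dens: "density_mat (m * n) \<rho>"
begin

lemma rherm: "hermitian_mat (m*n) \<rho>" using dens unfolding density_mat_def by blast
lemma rc: "\<rho> \<in> carrier_mat (m*n) (m*n)" using rherm unfolding hermitian_mat_def by blast
lemma rh: "\<forall>i<m*n. \<forall>j<m*n. \<rho>$$(i,j) = cnj (\<rho>$$(j,i))" using rherm unfolding hermitian_mat_def by blast
lemma rpsd: "v \<in> carrier_vec (m*n) \<Longrightarrow> 0 \<le> Re (\<Sum>i<m*n. \<Sum>j<m*n. cnj (v$i) * \<rho>$$(i,j) * v$j)"
  using dens unfolding density_mat_def by blast
lemma rtr: "mtrace \<rho> = 1" using dens unfolding density_mat_def by blast

definition Pk :: "(nat \<Rightarrow> complex vec) \<Rightarrow> nat \<Rightarrow> nat \<Rightarrow> nat \<Rightarrow> complex" where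
  "Pk e k a c = e k $ a * cnj (e k $ c)"
definition rk where "rk e k = sig m n \<rho> (Pk e k)"
definition rB where "rB = sig m n \<rho> (\<lambda>a c. if a = c then 1 else 0)"

lemma onb_vec: "onb m e \<Longrightarrow> k < m \<Longrightarrow> e k \<in> carrier_vec m" unfolding onb_def by blast
lemma onb_orth: "onb m e \<Longrightarrow> k < m \<Longrightarrow> l < m \<Longrightarrow> (\<Sum>i<m. cnj (e k $ i) * e l $ i) = (if k = l then 1 else 0)"
  unfolding onb_def by blast

lemma proj_entry: "onb m e \<Longrightarrow> k < m \<Longrightarrow> a<m \<Longrightarrow> c<m \<Longrightarrow> proj (e k) $$ (a,c) = Pk e k a c"
  using onb_vec[of e k] unfolding proj_def Pk_def by auto
lemma proj_carrier: "onb m e \<Longrightarrow> k < m \<Longrightarrow> proj (e k) \<in> carrier_mat m m"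
  using onb_vec[of e k] unfolding proj_def by auto

lemma rk_herm: "b<n \<Longrightarrow> d<n \<Longrightarrow> rk e k d b = cnj (rk e k b d)"
  unfolding rk_def by (rule sig_herm[OF rh]) (auto simp: Pk_def)

lemma rk_proj: "onb m e \<Longrightarrow> k < m \<Longrightarrow> sig m n \<rho> (\<lambda>a c. proj (e k) $$ (a,c)) d b = rk e k d b"
  unfolding rk_def by (rule sig_cong) (simp add: proj_entry)

lemma chi_TP:
  assumes e: "onb m e" and B: "\<And>k. k<m \<Longrightarrow> rBm k \<in> carrier_mat n n"
    and chi: "\<chi> = mat (m*n) (m*n) (\<lambda>ij. \<Sum>k<m. complex_of_real (p k) * kron (proj (e k)) (rBm k) $$ ij)"
  shows "TP (m*n) (\<rho> - \<chi>) (\<rho> - \<chi>) = TP (m*n) \<rho> \<rho>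
     - 2 * (\<Sum>k<m. complex_of_real (p k) * HS n (\<lambda>b d. rBm k $$ (b,d)) (rk e k))
     + (\<Sum>k<m. complex_of_real (p k)^2 * HS n (\<lambda>b d. rBm k $$ (b,d)) (\<lambda>b d. rBm k $$ (b,d)))"
proof -
  define K where "K k = kron (proj (e k)) (rBm k)" for k
  have Kc: "K k \<in> carrier_mat (m*n) (m*n)" if "k<m" for k
    unfolding K_def using proj_carrier[OF e that] B[OF that] by auto
  have cc: "\<chi> \<in> carrier_mat (m*n) (m*n)" unfolding chi by simp
  have ce: "\<And>i j. i<m*n \<Longrightarrow> j<m*n \<Longrightarrow> \<chi>$$(i,j) = (\<Sum>k<m. complex_of_real (p k) * K k $$ (i,j))"
    unfolding chi K_def by simp
  have 1: "TP (m*n) \<chi> \<rho> = (\<Sum>k<m. complex_of_real (p k) * HS n (\<lambda>b d. rBm k $$ (b,d)) (rk e k))"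
  proof -
    have "TP (m*n) \<chi> \<rho> = (\<Sum>k<m. complex_of_real (p k) * TP (m*n) (K k) \<rho>)"
      by (rule TP_lin_left[OF _ ce]) simp
    also have "\<dots> = (\<Sum>k<m. complex_of_real (p k) * HS n (\<lambda>b d. rBm k $$ (b,d)) (rk e k))"
    proof (rule sum.cong[OF refl])
      fix k assume "k \<in> {..<m}"
      then have k: "k<m" by simp
      have "TP (m*n) (K k) \<rho> = mtrace (K k * \<rho>)" using TP_trace[OF Kc[OF k] rc] by simp
      also have "\<dots> = (\<Sum>b<n. \<Sum>d<n. rBm k $$ (b,d) * sig m n \<rho> (\<lambda>a c. proj (e k) $$ (a,c)) d b)"
        unfolding K_def by (rule trace_kron[OF proj_carrier[OF e k] B[OF k] rc])
      also have "\<dots> = HS n (\<lambda>b d. rBm k $$ (b,d)) (rk e k)"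
        unfolding HS_def rk_proj[OF e k] ..
      finally show "complex_of_real (p k) * TP (m*n) (K k) \<rho> = complex_of_real (p k) * HS n (\<lambda>b d. rBm k $$ (b,d)) (rk e k)"
        by simp
    qed
    finally show ?thesis .
  qed
  have 2: "TP (m*n) \<chi> \<chi> = (\<Sum>k<m. complex_of_real (p k)^2 * HS n (\<lambda>b d. rBm k $$ (b,d)) (\<lambda>b d. rBm k $$ (b,d)))"
  proof -
    have KK: "TP (m*n) (K k) (K l) = (if k = l then HS n (\<lambda>b d. rBm k $$ (b,d)) (\<lambda>b d. rBm l $$ (b,d)) else 0)"
      if k: "k<m" and l: "l<m" for k l
    proof -
      have "TP (m*n) (K k) (K l) = (\<Sum>a<m. \<Sum>c<m. proj (e k) $$ (a,c) * proj (e l) $$ (c,a)) * HS n (\<lambda>b d. rBm k $$ (b,d)) (\<lambda>b d. rBm l $$ (b,d))"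
        unfolding K_def by (rule TP_kron[OF proj_carrier[OF e k] proj_carrier[OF e l] B[OF k] B[OF l]])
      also have "(\<Sum>a<m. \<Sum>c<m. proj (e k) $$ (a,c) * proj (e l) $$ (c,a)) =
          (\<Sum>a<m. cnj (e l $ a) * e k $ a) * (\<Sum>c<m. cnj (e k $ c) * e l $ c)"
        unfolding sum_product
        by (intro sum.cong refl) (simp add: proj_entry[OF e k] proj_entry[OF e l] Pk_def mult_ac)
      also have "\<dots> = (if k = l then 1 else 0)" using onb_orth[OF e l k] onb_orth[OF e k l] by auto
      finally show ?thesis by simp
    qed
    have "TP (m*n) \<chi> \<chi> = (\<Sum>k<m. complex_of_real (p k) * TP (m*n) (K k) \<chi>)"
      by (rule TP_lin_left[OF _ ce]) simp
    also have "\<dots> = (\<Sum>k<m. complex_of_real (p k) * (\<Sum>l<m. complex_of_real (p l) * TP (m*n) (K l) (K k)))"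
    proof (rule sum.cong[OF refl])
      fix k assume "k \<in> {..<m}"
      have "TP (m*n) (K k) \<chi> = TP (m*n) \<chi> (K k)" by (rule TP_sym)
      also have "\<dots> = (\<Sum>l<m. complex_of_real (p l) * TP (m*n) (K l) (K k))"
        by (rule TP_lin_left[OF _ ce]) simp
      finally show "complex_of_real (p k) * TP (m*n) (K k) \<chi> = complex_of_real (p k) * (\<Sum>l<m. complex_of_real (p l) * TP (m*n) (K l) (K k))"
        by simp
    qed
    also have "\<dots> = (\<Sum>k<m. complex_of_real (p k)^2 * HS n (\<lambda>b d. rBm k $$ (b,d)) (\<lambda>b d. rBm k $$ (b,d)))"
    proof (rule sum.cong[OF refl])
      fix k assume "k \<in> {..<m}"
      then have k: "k<m" by simp
      have "(\<Sum>l<m. complex_of_real (p l) * TP (m*n) (K l) (K k)) =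
          (\<Sum>l<m. if l = k then complex_of_real (p l) * HS n (\<lambda>b d. rBm l $$ (b,d)) (\<lambda>b d. rBm k $$ (b,d)) else 0)"
        by (intro sum.cong refl) (simp add: KK k)
      also have "\<dots> = complex_of_real (p k) * HS n (\<lambda>b d. rBm k $$ (b,d)) (\<lambda>b d. rBm k $$ (b,d))"
        using k by (simp add: sum.delta)
      finally show "complex_of_real (p k) * (\<Sum>l<m. complex_of_real (p l) * TP (m*n) (K l) (K k)) =
         complex_of_real (p k)^2 * HS n (\<lambda>b d. rBm k $$ (b,d)) (\<lambda>b d. rBm k $$ (b,d))"
        by (simp add: power2_eq_square)
    qed
    finally show ?thesis .
  qed
  show ?thesis using TP_minus[OF rc cc] 1 2 by simp
qed

lemma fchi:
  assumes e: "onb m e" and B: "\<And>k. k<m \<Longrightarrow> rBm k \<in> carrier_mat n n"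
    and chi: "\<chi> = mat (m*n) (m*n) (\<lambda>ij. \<Sum>k<m. complex_of_real (p k) * kron (proj (e k)) (rBm k) $$ ij)"
  shows "mtrace ((\<rho> - \<chi>) * (\<rho> - \<chi>)) = TP (m*n) \<rho> \<rho> - (\<Sum>k<m. HS n (rk e k) (rk e k))
     + (\<Sum>k<m. HS n (\<lambda>b d. rk e k b d - complex_of_real (p k) * rBm k $$ (b,d)) (\<lambda>b d. rk e k b d - complex_of_real (p k) * rBm k $$ (b,d)))"
proof -
  have cc: "\<rho> - \<chi> \<in> carrier_mat (m*n) (m*n)" unfolding chi using rc by (intro minus_carrier_mat) auto
  have "mtrace ((\<rho> - \<chi>) * (\<rho> - \<chi>)) = TP (m*n) (\<rho> - \<chi>) (\<rho> - \<chi>)" by (rule TP_trace[OF cc cc])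
  also have "\<dots> = TP (m*n) \<rho> \<rho>
     - 2 * (\<Sum>k<m. complex_of_real (p k) * HS n (\<lambda>b d. rBm k $$ (b,d)) (rk e k))
     + (\<Sum>k<m. complex_of_real (p k)^2 * HS n (\<lambda>b d. rBm k $$ (b,d)) (\<lambda>b d. rBm k $$ (b,d)))"
    by (rule chi_TP[OF e B chi])
  also have "\<dots> = TP (m*n) \<rho> \<rho> - (\<Sum>k<m. HS n (rk e k) (rk e k))
     + (\<Sum>k<m. HS n (rk e k) (rk e k) - 2 * complex_of_real (p k) * HS n (\<lambda>b d. rBm k $$ (b,d)) (rk e k)
        + complex_of_real (p k)^2 * HS n (\<lambda>b d. rBm k $$ (b,d)) (\<lambda>b d. rBm k $$ (b,d)))"
    by (simp add: sum.distrib sum_subtractf sum_distrib_left mult.assoc)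
  also have "(\<Sum>k<m. HS n (rk e k) (rk e k) - 2 * complex_of_real (p k) * HS n (\<lambda>b d. rBm k $$ (b,d)) (rk e k)
        + complex_of_real (p k)^2 * HS n (\<lambda>b d. rBm k $$ (b,d)) (\<lambda>b d. rBm k $$ (b,d)))
     = (\<Sum>k<m. HS n (\<lambda>b d. rk e k b d - complex_of_real (p k) * rBm k $$ (b,d)) (\<lambda>b d. rk e k b d - complex_of_real (p k) * rBm k $$ (b,d)))"
    by (rule sum.cong[OF refl], rule HS_expand[symmetric])
  finally show ?thesis .
qed

lemma rk_psd:
  assumes e: "onb m e" and k: "k < m"
  shows "0 \<le> Re (\<Sum>b<n. \<Sum>d<n. cnj (w b) * rk e k b d * w d)"
proof -
  define v where "v = vec (m*n) (\<lambda>i. e k $ (i div n) * w (i mod n))"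
  have vc: "v \<in> carrier_vec (m*n)" unfolding v_def by simp
  have "(\<Sum>i<m*n. \<Sum>j<m*n. cnj (v$i) * \<rho>$$(i,j) * v$j) =
     (\<Sum>a<m. \<Sum>b<n. \<Sum>c<m. \<Sum>d<n. cnj (e k $ a * w b) * \<rho>$$(a*n+b,c*n+d) * (e k $ c * w d))"
    unfolding sum_split_mult v_def by (intro sum.cong refl) (simp add: idx_lt)
  also have "\<dots> = (\<Sum>b<n. \<Sum>d<n. \<Sum>a<m. \<Sum>c<m. cnj (e k $ a * w b) * \<rho>$$(a*n+b,c*n+d) * (e k $ c * w d))"
    by (rule sum4_swap)
  also have "\<dots> = (\<Sum>b<n. \<Sum>d<n. \<Sum>c<m. \<Sum>a<m. cnj (w b) * (e k $ c * cnj (e k $ a) * \<rho>$$(a*n+b,c*n+d)) * w d)"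
    by (rule sum.cong[OF refl], rule sum.cong[OF refl], subst sum.swap) (simp add: mult_ac)
  also have "\<dots> = (\<Sum>b<n. \<Sum>d<n. cnj (w b) * rk e k b d * w d)"
    unfolding rk_def sig_def Pk_def by (simp only: sum_distrib_left sum_distrib_right)
  finally show ?thesis using rpsd[OF vc] by simp
qed

lemma psd_diag:
  fixes X :: "nat \<Rightarrow> nat \<Rightarrow> complex"
  assumes psd: "\<And>w. 0 \<le> Re (\<Sum>b<n. \<Sum>d<n. cnj (w b) * X b d * w d)" and u: "u < n"
  shows "0 \<le> Re (X u u)"
proof -
  define w where "w = (\<lambda>y. if y = u then 1 else (0::complex))"
  have "(\<Sum>x<n. \<Sum>y<n. cnj (w x) * X x y * w y) = (\<Sum>x<n. cnj (w x) * X x u)"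
    unfolding w_def using u by (intro sum.cong refl) (simp add: dsum_r mult.assoc)
  also have "\<dots> = X u u"
  proof -
    have cw: "cnj (if x = u then 1 else 0) = (if x = u then 1 else (0::complex))" for x by simp
    show ?thesis unfolding w_def using u by (simp add: dsum_l cw)
  qed
  finally show ?thesis using psd[of w] by simp
qed

lemma tr_rk_real: "cnj (\<Sum>b<n. rk e k b b) = (\<Sum>b<n. rk e k b b)"
  unfolding cnj_sum by (intro sum.cong refl) (metis lessThan_iff rk_herm complex_cnj_cnj)

lemma sum_tr_rk:
  assumes e: "onb m e"
  shows "(\<Sum>k<m. \<Sum>b<n. rk e k b b) = 1"
proof -
  have "(\<Sum>k<m. \<Sum>b<n. rk e k b b) = (\<Sum>b<n. \<Sum>k<m. sig m n \<rho> (Pk e k) b b)"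
    unfolding rk_def by (rule sum.swap)
  also have "\<dots> = (\<Sum>b<n. sig m n \<rho> (\<lambda>a c. \<Sum>k<m. Pk e k a c) b b)"
    by (intro sum.cong refl sig_sum[symmetric]) simp
  also have "\<dots> = (\<Sum>b<n. sig m n \<rho> (\<lambda>a c. if a = c then 1 else 0) b b)"
    by (intro sum.cong refl sig_cong) (simp add: Pk_def onb_complete[OF e])
  also have "\<dots> = (\<Sum>b<n. \<Sum>a<m. \<rho>$$(a*n+b, a*n+b))"
    unfolding sig_def by (intro sum.cong refl) (simp add: if_distrib[where f="\<lambda>v. v * _"] sum.delta cong: if_cong)
  also have "\<dots> = (\<Sum>a<m. \<Sum>b<n. \<rho>$$(a*n+b, a*n+b))" by (rule sum.swap)
  also have "\<dots> = mtrace \<rho>" unfolding mtrace_def using rc by (simp add: sum_split_mult)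
  finally show ?thesis using rtr by simp
qed

end

context GD begin

lemma dens_herm: "density_mat n X \<Longrightarrow> b<n \<Longrightarrow> d<n \<Longrightarrow> X $$ (d,b) = cnj (X $$ (b,d))"
  unfolding density_mat_def hermitian_mat_def by blast
lemma dens_carrier: "density_mat n X \<Longrightarrow> X \<in> carrier_mat n n"
  unfolding density_mat_def hermitian_mat_def by blast

lemma lower:
  assumes "zero_discord m n \<chi>"
  shows "\<exists>e. onb m e \<and> Re (TP (m*n) \<rho> \<rho>) - Re (\<Sum>k<m. HS n (rk e k) (rk e k)) \<le> Re (mtrace ((\<rho> - \<chi>) * (\<rho> - \<chi>)))"
proof -
  obtain e p rBm where e: "onb m e" and dn: "\<forall>k<m. density_mat n (rBm k)"
    and chi: "\<chi> = mat (m*n) (m*n) (\<lambda>ij. \<Sum>k<m. complex_of_real (p k) * kron (proj (e k)) (rBm k) $$ ij)"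
    using assms unfolding zero_discord_def by blast
  have B: "rBm k \<in> carrier_mat n n" if "k<m" for k using dn that dens_carrier by blast
  define Z where "Z k = (\<lambda>b d. rk e k b d - complex_of_real (p k) * rBm k $$ (b,d))" for k
  have eq: "mtrace ((\<rho> - \<chi>) * (\<rho> - \<chi>)) = TP (m*n) \<rho> \<rho> - (\<Sum>k<m. HS n (rk e k) (rk e k)) + (\<Sum>k<m. HS n (Z k) (Z k))"
    unfolding Z_def by (rule fchi[OF e B chi])
  have nn: "0 \<le> Re (HS n (Z k) (Z k))" if k: "k<m" for k
  proof (rule HS_nonneg, intro allI impI)
    fix b d assume "b<n" "d<n"
    then have "rk e k d b = cnj (rk e k b d)" "rBm k $$ (d,b) = cnj (rBm k $$ (b,d))"
      using rk_herm dens_herm dn k by blast+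
    then show "Z k d b = cnj (Z k b d)" unfolding Z_def by simp
  qed
  have "0 \<le> (\<Sum>k<m. Re (HS n (Z k) (Z k)))" using nn by (intro sum_nonneg) simp
  then have "0 \<le> Re (\<Sum>k<m. HS n (Z k) (Z k))" by (simp add: Re_sum)
  then show ?thesis using e eq by (intro exI[of _ e]) simp
qed

lemma attain:
  assumes e: "onb m e"
  shows "\<exists>\<chi>. zero_discord m n \<chi> \<and> Re (mtrace ((\<rho> - \<chi>) * (\<rho> - \<chi>))) = Re (TP (m*n) \<rho> \<rho>) - Re (\<Sum>k<m. HS n (rk e k) (rk e k))"
proof -
  define tr where "tr k = (\<Sum>b<n. rk e k b b)" for k
  define p where "p k = Re (tr k)" for k
  have trp: "tr k = complex_of_real (p k)" for k
    unfolding p_def tr_def using tr_rk_real[of e k] by (rule real_of_cnj[symmetric])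
  have p0: "0 \<le> p k" if "k<m" for k
    unfolding p_def tr_def Re_sum using psd_diag[OF rk_psd[OF e that]] by (intro sum_nonneg) simp
  have psum: "(\<Sum>k<m. p k) = 1"
    using sum_tr_rk[OF e] unfolding p_def tr_def by (metis Re_sum one_complex.sel(1))
  define E where "E = mat n n (\<lambda>(b,d). if b = 0 \<and> d = 0 then 1 else (0::complex))"
  define rBm where "rBm k = (if 0 < p k then mat n n (\<lambda>(b,d). rk e k b d / complex_of_real (p k)) else E)" for k
  have dE: "density_mat n E"
  proof -
    have h: "hermitian_mat n E" unfolding hermitian_mat_def E_def by auto
    have ps: "0 \<le> Re (\<Sum>i<n. \<Sum>j<n. cnj (v $ i) * E $$ (i,j) * v $ j)" for v :: "complex vec"
    proof -
      have "(\<Sum>i<n. \<Sum>j<n. cnj (v $ i) * E $$ (i,j) * v $ j) = (\<Sum>i<n. if i = 0 then cnj (v $ 0) * v $ 0 else 0)"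
        unfolding E_def using n0 by (intro sum.cong refl) (auto simp: if_distrib[where f="\<lambda>x. _ * x"] if_distrib[where f="\<lambda>x. x * _"] sum.delta cong: if_cong)
      also have "\<dots> = cnj (v $ 0) * v $ 0" using n0 by (simp add: sum.delta)
      finally show ?thesis by (simp add: complex_mult_cnj mult.commute[of "cnj _"])
    qed
    have t: "mtrace E = 1" unfolding mtrace_def E_def using n0 by (simp add: sum.delta cong: if_cong)
    show ?thesis unfolding density_mat_def using h ps t by blast
  qed
  have dn: "density_mat n (rBm k)" if k: "k<m" for k
  proof (cases "0 < p k")
    case False then show ?thesis unfolding rBm_def using dE by simp
  next
    case True
    define R where "R = mat n n (\<lambda>(b,d). rk e k b d / complex_of_real (p k))"
    have R: "rBm k = R" unfolding rBm_def R_def using True by simp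
    have h: "hermitian_mat n R" unfolding hermitian_mat_def R_def
      by (auto, metis complex_cnj_cnj complex_cnj_divide complex_cnj_complex_of_real rk_herm)
    have ps: "0 \<le> Re (\<Sum>i<n. \<Sum>j<n. cnj (v $ i) * R $$ (i,j) * v $ j)" for v :: "complex vec"
    proof -
      have "(\<Sum>i<n. \<Sum>j<n. cnj (v $ i) * R $$ (i,j) * v $ j) = (\<Sum>i<n. \<Sum>j<n. cnj (v $ i) * rk e k i j * v $ j) / complex_of_real (p k)"
        unfolding R_def sum_divide_distrib by (intro sum.cong refl) simp
      also have "Re \<dots> = Re (\<Sum>i<n. \<Sum>j<n. cnj (v $ i) * rk e k i j * v $ j) / p k"
        by (simp add: Re_divide_of_real)
      finally show ?thesis using rk_psd[OF e k, of "\<lambda>i. v $ i"] True by simp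
    qed
    have t: "mtrace R = 1"
    proof -
      have "mtrace R = tr k / complex_of_real (p k)" unfolding mtrace_def R_def tr_def sum_divide_distrib by simp
      then show ?thesis using trp True by simp
    qed
    show ?thesis unfolding density_mat_def R using h ps t by blast
  qed
  have B: "rBm k \<in> carrier_mat n n" if "k<m" for k using dn[OF that] dens_carrier by blast
  define \<chi> where "\<chi> = mat (m*n) (m*n) (\<lambda>ij. \<Sum>k<m. complex_of_real (p k) * kron (proj (e k)) (rBm k) $$ ij)"
  have zd: "zero_discord m n \<chi>" unfolding zero_discord_def \<chi>_def using e p0 psum dn by blast
  have Z0: "HS n (\<lambda>b d. rk e k b d - complex_of_real (p k) * rBm k $$ (b,d)) (\<lambda>b d. rk e k b d - complex_of_real (p k) * rBm k $$ (b,d)) = 0"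
    if k: "k<m" for k
  proof -
    have "rk e k b d - complex_of_real (p k) * rBm k $$ (b,d) = 0" if "b<n" "d<n" for b d
    proof (cases "0 < p k")
      case True then show ?thesis using that unfolding rBm_def by simp
    next
      case False
      then have pk: "p k = 0" using p0[OF k] by simp
      have "rk e k b d = 0"
      proof (rule psd_zero[of n "rk e k"])
        show "\<forall>b<n. \<forall>d<n. rk e k d b = cnj (rk e k b d)" using rk_herm by blast
        show "\<And>w. 0 \<le> Re (\<Sum>b<n. \<Sum>d<n. cnj (w b) * rk e k b d * w d)" by (rule rk_psd[OF e k])
        show "(\<Sum>b<n. rk e k b b) = 0" using trp[of k] pk unfolding tr_def by simp
      qed (use that in auto)
      then show ?thesis using pk by simp
    qed
    then show ?thesis unfolding HS_def by simp
  qed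
  have "mtrace ((\<rho> - \<chi>) * (\<rho> - \<chi>)) = TP (m*n) \<rho> \<rho> - (\<Sum>k<m. HS n (rk e k) (rk e k))
     + (\<Sum>k<m. HS n (\<lambda>b d. rk e k b d - complex_of_real (p k) * rBm k $$ (b,d)) (\<lambda>b d. rk e k b d - complex_of_real (p k) * rBm k $$ (b,d)))"
    by (rule fchi[OF e B \<chi>_def])
  also have "(\<Sum>k<m. HS n (\<lambda>b d. rk e k b d - complex_of_real (p k) * rBm k $$ (b,d)) (\<lambda>b d. rk e k b d - complex_of_real (p k) * rBm k $$ (b,d))) = 0"
    using Z0 by simp
  finally show ?thesis using zd by (intro exI[of _ \<chi>]) simp
qed

end

lemma herm_one: "hermitian_mat n (1\<^sub>m n)" unfolding hermitian_mat_def by auto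

lemma bilin:
  "(\<Sum>i\<in>I. \<Sum>i'\<in>I. u i * u i' * HS n (X i) (X i')) =
   HS n (\<lambda>b d. \<Sum>i\<in>I. u i * X i b d) (\<lambda>b d. \<Sum>i\<in>I. u i * X i b d)"
proof -
  have "(\<Sum>i\<in>I. \<Sum>i'\<in>I. u i * u i' * HS n (X i) (X i')) =
     (\<Sum>i\<in>I. \<Sum>i'\<in>I. \<Sum>b<n. \<Sum>d<n. (u i * X i b d) * (u i' * X i' d b))"
    unfolding HS_def by (simp add: sum_distrib_left mult_ac)
  also have "\<dots> = (\<Sum>b<n. \<Sum>d<n. \<Sum>i\<in>I. \<Sum>i'\<in>I. (u i * X i b d) * (u i' * X i' d b))"
    by (rule sum4_swap2)
  also have "\<dots> = HS n (\<lambda>b d. \<Sum>i\<in>I. u i * X i b d) (\<lambda>b d. \<Sum>i\<in>I. u i * X i b d)"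
    unfolding HS_def by (simp only: sum_product)
  finally show ?thesis .
qed

lemma HS_sum_right: "(\<Sum>k\<in>K. HS n X (Y k)) = HS n X (\<lambda>b d. \<Sum>k\<in>K. Y k b d)"
proof -
  have "(\<Sum>k\<in>K. HS n X (Y k)) = (\<Sum>k\<in>K. \<Sum>b<n. \<Sum>d<n. X b d * Y k d b)" unfolding HS_def ..
  also have "\<dots> = (\<Sum>b<n. \<Sum>k\<in>K. \<Sum>d<n. X b d * Y k d b)" by (rule sum.swap)
  also have "\<dots> = (\<Sum>b<n. \<Sum>d<n. \<Sum>k\<in>K. X b d * Y k d b)" by (rule sum.cong[OF refl], rule sum.swap)
  also have "\<dots> = HS n X (\<lambda>b d. \<Sum>k\<in>K. Y k b d)" unfolding HS_def by (simp only: sum_distrib_left)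
  finally show ?thesis .
qed

context GD begin

definition sg where "sg i = sig m n \<rho> (\<lambda>a c. lamA i $$ (a,c))"
definition Xc where "Xc i = (\<Sum>b<n. sg i b b)"
definition Tc where "Tc i j = (\<Sum>b<n. \<Sum>d<n. lamB j $$ (b,d) * sg i d b)"

lemma lamA_c: "i < m^2-1 \<Longrightarrow> lamA i \<in> carrier_mat m m" using su_carrier[OF sA] .
lemma lamB_c: "j < n^2-1 \<Longrightarrow> lamB j \<in> carrier_mat n n" using su_carrier[OF sB] .

lemma x_c: assumes i: "i < m^2-1" shows "complex_of_real (xvec m n lamA \<rho> i) = of_nat m / 2 * Xc i"
proof -
  have K: "kron (lamA i) (1\<^sub>m n) \<in> carrier_mat (m*n) (m*n)" using lamA_c[OF i] by auto
  have hr: "cnj (mtrace (kron (lamA i) (1\<^sub>m n) * \<rho>)) = mtrace (kron (lamA i) (1\<^sub>m n) * \<rho>)"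
    by (rule herm_trace_real[OF herm_kron[OF su_herm[OF sA i] herm_one] rherm])
  have "mtrace (kron (lamA i) (1\<^sub>m n) * \<rho>) = (\<Sum>b<n. \<Sum>d<n. 1\<^sub>m n $$ (b,d) * sg i d b)"
    unfolding sg_def by (rule trace_kron[OF lamA_c[OF i] _ rc]) simp
  also have "\<dots> = Xc i" unfolding Xc_def
    by (intro sum.cong refl) (simp add: if_distrib[where f="\<lambda>x. x * _"] sum.delta cong: if_cong)
  finally show ?thesis unfolding xvec_def using real_of_cnj[OF hr] by simp
qed

lemma t_c: assumes i: "i < m^2-1" and j: "j < n^2-1"
  shows "complex_of_real (tmat m n lamA lamB \<rho> i j) = of_nat (m*n) / 4 * Tc i j"
proof -
  have hr: "cnj (mtrace (kron (lamA i) (lamB j) * \<rho>)) = mtrace (kron (lamA i) (lamB j) * \<rho>)"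
    by (rule herm_trace_real[OF herm_kron[OF su_herm[OF sA i] su_herm[OF sB j]] rherm])
  have "mtrace (kron (lamA i) (lamB j) * \<rho>) = Tc i j"
    unfolding sg_def Tc_def by (rule trace_kron[OF lamA_c[OF i] lamB_c[OF j] rc])
  then show ?thesis unfolding tmat_def using real_of_cnj[OF hr] by simp
qed

lemma G_c: assumes i: "i < m^2-1" and i': "i' < m^2-1"
  shows "complex_of_real (Gmat m n lamA lamB \<rho> i i') = of_nat m^2 * of_nat n / 4 * HS n (sg i) (sg i')"
proof -
  have F: "(\<Sum>j<n^2-1. Tc i j * Tc i' j) = 2 * HS n (sg i) (sg i') - 2 / of_nat n * (Xc i * Xc i')"
  proof -
    have "(\<Sum>j<n^2-1. Tc i j * Tc i' j) = 2 * (\<Sum>b<n. \<Sum>d<n. sg i d b * sg i' b d) - 2/of_nat n * ((\<Sum>b<n. sg i b b) * (\<Sum>b<n. sg i' b b))"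
      unfolding Tc_def by (rule fierz_contract[OF n0 sB, of "\<lambda>b d. sg i d b" "\<lambda>b d. sg i' d b"])
    also have "(\<Sum>b<n. \<Sum>d<n. sg i d b * sg i' b d) = HS n (sg i') (sg i)" unfolding HS_def
      by (simp add: mult.commute)
    finally show ?thesis unfolding Xc_def using HS_sym[of n "sg i" "sg i'"] by simp
  qed
  have "complex_of_real (Gmat m n lamA lamB \<rho> i i') =
     (of_nat m / 2 * Xc i) * (of_nat m / 2 * Xc i') + 2 / of_nat n * (\<Sum>j<n^2-1. (of_nat (m*n) / 4 * Tc i j) * (of_nat (m*n) / 4 * Tc i' j))"
  proof -
    have "complex_of_real (Gmat m n lamA lamB \<rho> i i') = complex_of_real (xvec m n lamA \<rho> i) * complex_of_real (xvec m n lamA \<rho> i')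
      + complex_of_real (2 / real n) * (\<Sum>j<n^2-1. complex_of_real (tmat m n lamA lamB \<rho> i j) * complex_of_real (tmat m n lamA lamB \<rho> i' j))"
      unfolding Gmat_def of_real_add of_real_mult of_real_sum ..
    also have "\<dots> = (of_nat m / 2 * Xc i) * (of_nat m / 2 * Xc i') + complex_of_real (2 / real n) * (\<Sum>j<n^2-1. (of_nat (m*n) / 4 * Tc i j) * (of_nat (m*n) / 4 * Tc i' j))"
      unfolding x_c[OF i] x_c[OF i'] using t_c[OF i] t_c[OF i'] by (intro arg_cong2[where f="(+)"] arg_cong2[where f="(*)"] refl sum.cong) simp_all
    finally show ?thesis by simp
  qed
  also have "(\<Sum>j<n^2-1. (of_nat (m*n) / 4 * Tc i j) * (of_nat (m*n) / 4 * Tc i' j)) = (of_nat (m*n) / 4)^2 * (\<Sum>j<n^2-1. Tc i j * Tc i' j)"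
    by (simp add: sum_distrib_left power2_eq_square mult_ac)
  finally show ?thesis unfolding F using n0 by (simp add: field_simps power2_eq_square)
qed

end

lemma HS_cong: "(\<And>b d. b<n \<Longrightarrow> d<n \<Longrightarrow> X b d = X' b d) \<Longrightarrow> (\<And>b d. b<n \<Longrightarrow> d<n \<Longrightarrow> Y b d = Y' b d) \<Longrightarrow> HS n X Y = HS n X' Y'"
  unfolding HS_def by (intro sum.cong refl) auto

lemma HS_scale: "HS n (\<lambda>b d. c * X b d) (\<lambda>b d. c * X b d) = c^2 * HS n X X"
  unfolding HS_def by (simp add: sum_distrib_left power2_eq_square mult_ac)

context GD begin

lemma rB_eq: "b<n \<Longrightarrow> d<n \<Longrightarrow> rB b d = (\<Sum>a<m. \<rho>$$(a*n+b, a*n+d))"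
  unfolding rB_def sig_def by (intro sum.cong refl) (simp add: if_distrib[where f="\<lambda>x. x * _"] sum.delta cong: if_cong)

lemma TP_split: "TP (m*n) \<rho> \<rho> = (\<Sum>b<n. \<Sum>d<n. \<Sum>a<m. \<Sum>c<m. \<rho>$$(c*n+b, a*n+d) * \<rho>$$(a*n+d, c*n+b))"
proof -
  have "TP (m*n) \<rho> \<rho> = (\<Sum>c<m. \<Sum>b<n. \<Sum>a<m. \<Sum>d<n. \<rho>$$(c*n+b, a*n+d) * \<rho>$$(a*n+d, c*n+b))"
    unfolding TP_def sum_split_mult ..
  also have "\<dots> = (\<Sum>b<n. \<Sum>d<n. \<Sum>c<m. \<Sum>a<m. \<rho>$$(c*n+b, a*n+d) * \<rho>$$(a*n+d, c*n+b))"
    by (rule sum4_swap)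
  also have "\<dots> = (\<Sum>b<n. \<Sum>d<n. \<Sum>a<m. \<Sum>c<m. \<rho>$$(c*n+b, a*n+d) * \<rho>$$(a*n+d, c*n+b))"
    by (rule sum.cong[OF refl], rule sum.cong[OF refl], rule sum.swap)
  finally show ?thesis .
qed

lemma SHS: "(\<Sum>i<m^2-1. HS n (sg i) (sg i)) = 2 * TP (m*n) \<rho> \<rho> - 2/of_nat m * HS n rB rB"
proof -
  have "(\<Sum>i<m^2-1. HS n (sg i) (sg i)) = (\<Sum>i<m^2-1. \<Sum>b<n. \<Sum>d<n. sg i b d * sg i d b)" unfolding HS_def ..
  also have "\<dots> = (\<Sum>b<n. \<Sum>i<m^2-1. \<Sum>d<n. sg i b d * sg i d b)" by (rule sum.swap)
  also have "\<dots> = (\<Sum>b<n. \<Sum>d<n. \<Sum>i<m^2-1. sg i b d * sg i d b)" by (rule sum.cong[OF refl], rule sum.swap)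
  also have "\<dots> = (\<Sum>b<n. \<Sum>d<n. 2 * (\<Sum>a<m. \<Sum>c<m. \<rho>$$(c*n+b, a*n+d) * \<rho>$$(a*n+d, c*n+b)) - 2/of_nat m * (rB b d * rB d b))"
  proof (rule sum.cong[OF refl], rule sum.cong[OF refl])
    fix b d assume "b \<in> {..<n}" "d \<in> {..<n}"
    then have bd: "b<n" "d<n" by auto
    have "(\<Sum>i<m^2-1. sg i b d * sg i d b) = 2 * (\<Sum>a<m. \<Sum>c<m. \<rho>$$(c*n+b, a*n+d) * \<rho>$$(a*n+d, c*n+b))
       - 2/of_nat m * ((\<Sum>a<m. \<rho>$$(a*n+b, a*n+d)) * (\<Sum>a<m. \<rho>$$(a*n+d, a*n+b)))"
      unfolding sg_def sig_def by (rule fierz_contract[OF m0 sA])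
    then show "(\<Sum>i<m^2-1. sg i b d * sg i d b) = 2 * (\<Sum>a<m. \<Sum>c<m. \<rho>$$(c*n+b, a*n+d) * \<rho>$$(a*n+d, c*n+b)) - 2/of_nat m * (rB b d * rB d b)"
      using rB_eq[OF bd] rB_eq[OF bd(2,1)] by simp
  qed
  also have "\<dots> = 2 * TP (m*n) \<rho> \<rho> - 2/of_nat m * HS n rB rB"
    unfolding TP_split HS_def by (simp only: sum_subtractf sum_distrib_left)
  finally show ?thesis .
qed

lemma TrG: "(\<Sum>i<m^2-1. complex_of_real (Gmat m n lamA lamB \<rho> i i)) = of_nat m^2 * of_nat n / 4 * (2 * TP (m*n) \<rho> \<rho> - 2/of_nat m * HS n rB rB)"
proof -
  have "(\<Sum>i<m^2-1. complex_of_real (Gmat m n lamA lamB \<rho> i i)) = (\<Sum>i<m^2-1. of_nat m^2 * of_nat n / 4 * HS n (sg i) (sg i))"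
    by (intro sum.cong refl) (simp add: G_c)
  also have "\<dots> = of_nat m^2 * of_nat n / 4 * (\<Sum>i<m^2-1. HS n (sg i) (sg i))" by (simp only: sum_distrib_left)
  finally show ?thesis unfolding SHS .
qed

definition uu where "uu e k i = (\<Sum>a<m. \<Sum>c<m. lamA i $$ (a,c) * Pk e k c a)"
definition kap where "kap = complex_of_real (sqrt 2 / real m * (real m / 2))"

lemma kap2: "kap^2 = 1/2"
proof -
  have kd: "kap = complex_of_real (sqrt 2 / 2)" unfolding kap_def using m0 by simp
  have h: "(sqrt 2 / 2)^2 = (1/2::real)" by (simp add: power_divide)
  show ?thesis unfolding kd of_real_power[symmetric] h by simp
qed

lemma mu_c: assumes e: "onb m e" and k: "k<m" and i: "i < m^2-1"
  shows "complex_of_real (mu_vec m lamA (e k) i) = kap * uu e k i"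
proof -
  have dv: "dim_vec (e k) = m" using onb_vec[OF e k] by simp
  have hr: "cnj (mtrace (lamA i * proj (e k))) = mtrace (lamA i * proj (e k))"
    by (rule herm_trace_real[OF su_herm[OF sA i] proj_herm[OF dv]])
  have "mtrace (lamA i * proj (e k)) = (\<Sum>a<m. \<Sum>c<m. lamA i $$ (a,c) * proj (e k) $$ (c,a))"
    by (rule mtrace_mult[OF lamA_c[OF i] proj_carrier[OF e k]])
  also have "\<dots> = uu e k i" unfolding uu_def by (intro sum.cong refl) (simp add: proj_entry[OF e k])
  finally have "complex_of_real (Re (mtrace (lamA i * proj (e k)))) = uu e k i" using real_of_cnj[OF hr] by simp
  then show ?thesis unfolding mu_vec_def coherence_vec_def kap_def
    by (metis of_real_mult mult.assoc)
qed

lemma uS: assumes e: "onb m e" and k: "k<m" and bd: "b<n" "d<n"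
  shows "(\<Sum>i<m^2-1. uu e k i * sg i b d) = 2 * rk e k b d - 2/of_nat m * rB b d"
proof -
  have "(\<Sum>i<m^2-1. uu e k i * sg i b d) = 2 * (\<Sum>a<m. \<Sum>c<m. Pk e k c a * \<rho>$$(a*n+b, c*n+d))
      - 2/of_nat m * ((\<Sum>a<m. Pk e k a a) * (\<Sum>a<m. \<rho>$$(a*n+b, a*n+d)))"
    unfolding uu_def sg_def sig_def by (rule fierz_contract[OF m0 sA])
  also have "(\<Sum>a<m. \<Sum>c<m. Pk e k c a * \<rho>$$(a*n+b, c*n+d)) = rk e k b d"
    unfolding rk_def sig_def by (rule sum.swap)
  also have "(\<Sum>a<m. Pk e k a a) = 1" using onb_orth[OF e k k] unfolding Pk_def by (simp add: mult.commute)
  finally show ?thesis using rB_eq[OF bd] by simp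
qed

lemma per_k: assumes e: "onb m e" and k: "k<m"
  shows "(\<Sum>i<m^2-1. \<Sum>i'<m^2-1. complex_of_real (mu_vec m lamA (e k) i * Gmat m n lamA lamB \<rho> i i' * mu_vec m lamA (e k) i'))
    = of_nat m^2 * of_nat n / 2 * HS n (\<lambda>b d. rk e k b d - 1/of_nat m * rB b d) (\<lambda>b d. rk e k b d - 1/of_nat m * rB b d)"
proof -
  let ?C = "of_nat m^2 * of_nat n / 4 :: complex"
  have "(\<Sum>i<m^2-1. \<Sum>i'<m^2-1. complex_of_real (mu_vec m lamA (e k) i * Gmat m n lamA lamB \<rho> i i' * mu_vec m lamA (e k) i'))
     = (\<Sum>i<m^2-1. \<Sum>i'<m^2-1. ?C * kap^2 * (uu e k i * uu e k i' * HS n (sg i) (sg i')))"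
    by (intro sum.cong refl) (simp add: mu_c[OF e k] G_c power2_eq_square mult_ac)
  also have "\<dots> = ?C * kap^2 * (\<Sum>i<m^2-1. \<Sum>i'<m^2-1. uu e k i * uu e k i' * HS n (sg i) (sg i'))"
    by (simp only: sum_distrib_left)
  also have "(\<Sum>i<m^2-1. \<Sum>i'<m^2-1. uu e k i * uu e k i' * HS n (sg i) (sg i'))
     = HS n (\<lambda>b d. \<Sum>i<m^2-1. uu e k i * sg i b d) (\<lambda>b d. \<Sum>i<m^2-1. uu e k i * sg i b d)"
    by (rule bilin)
  also have "\<dots> = HS n (\<lambda>b d. 2 * (rk e k b d - 1/of_nat m * rB b d)) (\<lambda>b d. 2 * (rk e k b d - 1/of_nat m * rB b d))"
  proof -
    have Y: "\<And>b d. b<n \<Longrightarrow> d<n \<Longrightarrow> (\<Sum>i<m^2-1. uu e k i * sg i b d) = 2 * (rk e k b d - 1/of_nat m * rB b d)"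
      using uS[OF e k] by (simp add: right_diff_distrib)
    show ?thesis by (rule HS_cong) (simp_all only: Y)
  qed
  also have "\<dots> = 4 * HS n (\<lambda>b d. rk e k b d - 1/of_nat m * rB b d) (\<lambda>b d. rk e k b d - 1/of_nat m * rB b d)"
    by (subst HS_scale) simp
  finally show ?thesis unfolding kap2 by simp
qed

lemma sum_rk: assumes e: "onb m e" and bd: "b<n" "d<n" shows "(\<Sum>k<m. rk e k b d) = rB b d"
proof -
  have "(\<Sum>k<m. rk e k b d) = sig m n \<rho> (\<lambda>a c. \<Sum>k<m. Pk e k a c) b d"
    unfolding rk_def by (rule sig_sum[symmetric]) simp
  also have "\<dots> = rB b d" unfolding rB_def
    by (rule sig_cong) (simp add: Pk_def onb_complete[OF e])
  finally show ?thesis .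
qed

lemma sumZ: assumes e: "onb m e"
  shows "(\<Sum>k<m. HS n (\<lambda>b d. rk e k b d - 1/of_nat m * rB b d) (\<lambda>b d. rk e k b d - 1/of_nat m * rB b d))
    = (\<Sum>k<m. HS n (rk e k) (rk e k)) - 1/of_nat m * HS n rB rB"
proof -
  have "(\<Sum>k<m. HS n (\<lambda>b d. rk e k b d - 1/of_nat m * rB b d) (\<lambda>b d. rk e k b d - 1/of_nat m * rB b d))
     = (\<Sum>k<m. HS n (rk e k) (rk e k) - 2 * (1/of_nat m) * HS n rB (rk e k) + (1/of_nat m)^2 * HS n rB rB)"
    by (intro sum.cong refl HS_expand)
  also have "\<dots> = (\<Sum>k<m. HS n (rk e k) (rk e k)) - 2 * (1/of_nat m) * (\<Sum>k<m. HS n rB (rk e k)) + of_nat m * ((1/of_nat m)^2 * HS n rB rB)"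
    by (simp add: sum.distrib sum_subtractf sum_distrib_left)
  also have "(\<Sum>k<m. HS n rB (rk e k)) = HS n rB rB"
    unfolding HS_sum_right by (rule HS_cong) (simp_all add: sum_rk[OF e])
  finally show ?thesis using m0 by (simp add: field_simps power2_eq_square)
qed

end

lemma TP_nonneg:
  assumes "\<forall>i<N. \<forall>j<N. D$$(j,i) = cnj (D$$(i,j))"
  shows "0 \<le> Re (TP N D D)"
proof -
  have "TP N D D = (\<Sum>i<N. \<Sum>j<N. D$$(i,j) * cnj (D$$(i,j)))"
    unfolding TP_def
  proof (rule sum.cong[OF refl], rule sum.cong[OF refl])
    fix i j assume "i \<in> {..<N}" "j \<in> {..<N}"
    then have "D$$(j,i) = cnj (D$$(i,j))" using assms by blast
    then show "D$$(i,j) * D$$(j,i) = D$$(i,j) * cnj (D$$(i,j))" by simp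
  qed
  also have "Re \<dots> = (\<Sum>i<N. \<Sum>j<N. (Re (D$$(i,j)))^2 + (Im (D$$(i,j)))^2)"
    by (simp add: complex_mult_cnj)
  finally show ?thesis by (simp add: sum_nonneg)
qed

lemma onb_unit: "onb m (\<lambda>k. unit_vec m k)"
  unfolding onb_def
proof (intro conjI allI impI)
  fix k l assume k: "k<m" and l: "l<m"
  have "(\<Sum>i<m. cnj (unit_vec m k $ i) * unit_vec m l $ i) = (\<Sum>i<m. if i = k then (if k = l then 1 else 0) else 0)"
    by (intro sum.cong refl) (auto simp: unit_vec_def)
  also have "\<dots> = (if k = l then 1 else 0)" using k by (simp add: sum.delta)
  finally show "(\<Sum>i<m. cnj (unit_vec m k $ i) * unit_vec m l $ i) = (if k = l then 1 else 0)" .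
qed (auto)

context GD begin

lemma zd_herm:
  assumes "zero_discord m n \<chi>"
  shows "\<forall>i<m*n. \<forall>j<m*n. (\<rho> - \<chi>)$$(j,i) = cnj ((\<rho> - \<chi>)$$(i,j))"
proof (intro allI impI)
  fix i j assume i: "i<m*n" and j: "j<m*n"
  obtain e p rBm where e: "onb m e" and dn: "\<forall>k<m. density_mat n (rBm k)"
    and chi: "\<chi> = mat (m*n) (m*n) (\<lambda>ij. \<Sum>k<m. complex_of_real (p k) * kron (proj (e k)) (rBm k) $$ ij)"
    using assms unfolding zero_discord_def by blast
  have hk: "kron (proj (e k)) (rBm k) $$ (j,i) = cnj (kron (proj (e k)) (rBm k) $$ (i,j))" if k: "k<m" for k
  proof -
    have dv: "dim_vec (e k) = m" using onb_vec[OF e k] by simp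
    have "hermitian_mat (m*n) (kron (proj (e k)) (rBm k))"
      by (rule herm_kron[OF proj_herm[OF dv]]) (use dn k in \<open>simp add: density_mat_def\<close>)
    then show ?thesis using i j unfolding hermitian_mat_def by blast
  qed
  have "\<rho>$$(j,i) = cnj (\<rho>$$(i,j))" using rh i j by blast
  moreover have "\<chi>$$(j,i) = cnj (\<chi>$$(i,j))" unfolding chi using i j hk by simp
  ultimately show "(\<rho> - \<chi>)$$(j,i) = cnj ((\<rho> - \<chi>)$$(i,j))" using i j unfolding chi by simp
qed

lemma f_nonneg:
  assumes "zero_discord m n \<chi>"
  shows "0 \<le> Re (mtrace ((\<rho> - \<chi>) * (\<rho> - \<chi>)))"
proof -
  obtain e p rBm where chi: "\<chi> = mat (m*n) (m*n) (\<lambda>ij. \<Sum>k<m. complex_of_real (p k) * kron (proj (e k)) (rBm k) $$ ij)"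
    using assms unfolding zero_discord_def by blast
  have cc: "\<rho> - \<chi> \<in> carrier_mat (m*n) (m*n)" unfolding chi using rc by (intro minus_carrier_mat) auto
  show ?thesis unfolding TP_trace[OF cc cc] by (rule TP_nonneg[OF zd_herm[OF assms]])
qed

definition gg where "gg e = (\<Sum>k<m. \<Sum>i<m^2-1. \<Sum>i'<m^2-1.
   mu_vec m lamA (e k) i * Gmat m n lamA lamB \<rho> i i' * mu_vec m lamA (e k) i')"

lemma partB: assumes e: "onb m e"
  shows "2 / (real m ^ 2 * real n) * ((\<Sum>i < m^2 - 1. Gmat m n lamA lamB \<rho> i i) - gg e)
    = Re (TP (m*n) \<rho> \<rho>) - Re (\<Sum>k<m. HS n (rk e k) (rk e k))"
proof -
  have g: "complex_of_real (gg e) = of_nat m^2 * of_nat n / 2 * ((\<Sum>k<m. HS n (rk e k) (rk e k)) - 1/of_nat m * HS n rB rB)"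
  proof -
    have "complex_of_real (gg e) = (\<Sum>k<m. \<Sum>i<m^2-1. \<Sum>i'<m^2-1.
       complex_of_real (mu_vec m lamA (e k) i * Gmat m n lamA lamB \<rho> i i' * mu_vec m lamA (e k) i'))"
      unfolding gg_def of_real_sum ..
    also have "\<dots> = (\<Sum>k<m. of_nat m^2 * of_nat n / 2 * HS n (\<lambda>b d. rk e k b d - 1/of_nat m * rB b d) (\<lambda>b d. rk e k b d - 1/of_nat m * rB b d))"
      by (rule sum.cong[OF refl], rule per_k[OF e]) simp
    also have "\<dots> = of_nat m^2 * of_nat n / 2 * (\<Sum>k<m. HS n (\<lambda>b d. rk e k b d - 1/of_nat m * rB b d) (\<lambda>b d. rk e k b d - 1/of_nat m * rB b d))"
      by (simp only: sum_distrib_left)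
    finally show ?thesis unfolding sumZ[OF e] .
  qed
  have t: "complex_of_real (\<Sum>i < m^2 - 1. Gmat m n lamA lamB \<rho> i i) = of_nat m^2 * of_nat n / 4 * (2 * TP (m*n) \<rho> \<rho> - 2/of_nat m * HS n rB rB)"
    unfolding of_real_sum by (rule TrG)
  have "complex_of_real (2 / (real m ^ 2 * real n) * ((\<Sum>i < m^2 - 1. Gmat m n lamA lamB \<rho> i i) - gg e))
     = 2 / (of_nat m ^ 2 * of_nat n) * (complex_of_real (\<Sum>i < m^2 - 1. Gmat m n lamA lamB \<rho> i i) - complex_of_real (gg e))"
    by simp
  also have "\<dots> = TP (m*n) \<rho> \<rho> - (\<Sum>k<m. HS n (rk e k) (rk e k))"
    unfolding g t using m0 n0 by (simp add: field_simps power2_eq_square)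
  finally have "complex_of_real (2 / (real m ^ 2 * real n) * ((\<Sum>i < m^2 - 1. Gmat m n lamA lamB \<rho> i i) - gg e))
     = TP (m*n) \<rho> \<rho> - (\<Sum>k<m. HS n (rk e k) (rk e k))" .
  then have "Re (complex_of_real (2 / (real m ^ 2 * real n) * ((\<Sum>i < m^2 - 1. Gmat m n lamA lamB \<rho> i i) - gg e)))
     = Re (TP (m*n) \<rho> \<rho> - (\<Sum>k<m. HS n (rk e k) (rk e k)))" by simp
  then show ?thesis by simp
qed

end

theorem mainTheorem6:
  fixes m n :: nat and lamA lamB :: "nat \<Rightarrow> complex mat" and \<rho> :: "complex mat"
  assumes "0 < m" and "0 < n"
    and "su_generators m lamA" and "su_generators n lamB"
    and "density_mat (m * n) \<rho>"
  shows "geometric_discord m n \<rho> =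
     2 / (real m ^ 2 * real n) *
       ((\<Sum>i < m^2 - 1. Gmat m n lamA lamB \<rho> i i)
        - Sup {(\<Sum>k<m. \<Sum>i < m^2 - 1. \<Sum>i' < m^2 - 1.
                  mu_vec m lamA (e k) i * Gmat m n lamA lamB \<rho> i i' * mu_vec m lamA (e k) i')
               | e. onb m e})"
proof -
  interpret G: GD m n lamA lamB \<rho> using assms by unfold_locales
  define S where "S = {Re (mtrace ((\<rho> - \<chi>) * (\<rho> - \<chi>))) | \<chi>. zero_discord m n \<chi>}"
  define T where "T = {(\<Sum>k<m. \<Sum>i < m^2 - 1. \<Sum>i' < m^2 - 1.
                  mu_vec m lamA (e k) i * Gmat m n lamA lamB \<rho> i i' * mu_vec m lamA (e k) i')
               | e. onb m e}"
  define K where "K = 2 / (real m ^ 2 * real n)"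
  define trG where "trG = (\<Sum>i < m^2 - 1. Gmat m n lamA lamB \<rho> i i)"
  define c0 where "c0 = Re (TP (m*n) \<rho> \<rho>)"
  define h where "h e = Re (\<Sum>k<m. HS n (G.rk e k) (G.rk e k))" for e
  have K0: "0 < K" unfolding K_def using assms(1,2) by simp
  have T_eq: "T = {G.gg e | e. onb m e}" unfolding T_def G.gg_def ..
  have pB: "K * (trG - G.gg e) = c0 - h e" if "onb m e" for e
    unfolding K_def trG_def c0_def h_def using G.partB[OF that] .
  have inS: "c0 - h e \<in> S" if "onb m e" for e
    using G.attain[OF that] unfolding S_def c0_def h_def by force
  have lo: "\<exists>e. onb m e \<and> c0 - h e \<le> s" if "s \<in> S" for s
    using that G.lower unfolding S_def c0_def h_def by force
  have nn: "0 \<le> s" if "s \<in> S" for s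
    using that G.f_nonneg unfolding S_def by force
  have Sne: "S \<noteq> {}" using inS[OF onb_unit] by blast
  have Tne: "T \<noteq> {}" unfolding T_eq using onb_unit by blast
  have bdS: "bdd_below S" using nn by (intro bdd_belowI) auto
  have gle: "G.gg e \<le> trG" if "onb m e" for e
  proof -
    have "0 \<le> K * (trG - G.gg e)" using pB[OF that] nn[OF inS[OF that]] by simp
    then show ?thesis using K0 by (simp add: zero_le_mult_iff)
  qed
  have bdT: "bdd_above T" unfolding T_eq using gle by (intro bdd_aboveI) auto
  have "Inf S = K * (trG - Sup T)"
  proof (rule antisym)
    show "K * (trG - Sup T) \<le> Inf S"
    proof (rule cInf_greatest[OF Sne])
      fix s assume "s \<in> S"
      then obtain e where e: "onb m e" and les: "c0 - h e \<le> s" using lo by blast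
      have "G.gg e \<le> Sup T" using bdT e unfolding T_eq by (intro cSup_upper) auto
      then have "K * (trG - Sup T) \<le> K * (trG - G.gg e)" using K0 by (intro mult_left_mono) auto
      then show "K * (trG - Sup T) \<le> s" using pB[OF e] les by simp
    qed
  next
    have "Sup T \<le> trG - Inf S / K"
    proof (rule cSup_least[OF Tne])
      fix t assume "t \<in> T"
      then obtain e where e: "onb m e" and t: "t = G.gg e" unfolding T_eq by blast
      have "Inf S \<le> c0 - h e" using inS[OF e] bdS by (rule cInf_lower)
      then have "Inf S \<le> K * (trG - G.gg e)" using pB[OF e] by simp
      then have "Inf S / K \<le> trG - G.gg e" using K0 by (simp add: divide_le_eq mult.commute)
      then show "t \<le> trG - Inf S / K" using t by simp
    qed
    then have "K * (Inf S / K) \<le> K * (trG - Sup T)" using K0 by (intro mult_left_mono) auto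
    then show "Inf S \<le> K * (trG - Sup T)" using K0 by simp
  qed
  then show ?thesis unfolding geometric_discord_def S_def[symmetric] T_def[symmetric] K_def trG_def .
qed

end
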